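(* Consider the static single-object erasure-coded Byzantine read/write protocol described in the context over a set $C$ of flexnodes, at most $b<\frac{|C|-k}{3}$ of which are Byzantine, and suppose at most $\delta$ write operations are concurrent with any read. Then every execution of the protocol implements an atomic (linearizable) read/write register: letting $\Pi$ be the set of complete read/write operations of the execution, there is an irreflexive partial order $\prec$ on $\Pi$ such that (A1) for $\pi_1,\pi_2\in\Pi$, if $\pi_1$ completes before $\pi_2$ is invoked then not $\pi_2\prec\pi_1$; (A2) if $\pi\in\Pi$ is a write and $\pi'\in\Pi$ is any operation, then $\pi\prec\pi'$ or $\pi'\prec\pi$; (A3) every read returns the value written by the last write preceding it according to $\prec$, or the initial value $v_0$ if there is no such write.
   Context: Model. $C$ is a fixed finite set of processes ("flexnodes") over asynchronous reliable channels (messages between nonfaulty processes eventually delivered unaltered). Up to $b$ flexnodes may be Byzantine. Processes invoking reads/writes follow the protocol but may crash. Signatures are unforgeable. An $[n,k]$ RLNC code with $n=|C|$: $\mathrm{Encode}(v)$ produces $|C|$ coded elements, any $k$ of which (from the same encoding) recover $v$. Tags are pairs $(z,w)$, $z\in\mathbb{N}$, $w$ a unique writer identifier from a totally ordered set, ordered lexicographically; $\langle t_0,v_0\rangle$ is the initial tag-value pair. A parameter $\delta\ge1$ is fixed. A quorum is any subset of $C$ of size $\lceil (2|C|+k)/3\rceil$. State. Each flexnode keeps a set $List$ of signed triples $(\langle t,e\rangle,\sigma)$, initially holding the initial pair with tag $t_0$. Primitives (by flexnode $p$): get-tag: query all, each replies with its signed max-tag entry, wait for replies from a quorum, return the maximum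 tag among replies with valid signatures. put-data$(\langle t,v\rangle)$: encode $v$ into $e_1,\dots,e_{|C|}$, send $\langle t,e_j\rangle$ signed by $p$ to the $j$-th flexnode; a receiver adds it to $List$ if the signature verifies and no entry with tag $t$ exists, then if $|List|>\delta+1$ removes the entries with minimum tag, and acknowledges; $p$ waits for a quorum of acknowledgements. get-data: query all, each replies with its $List$, wait for a quorum, keep verified pairs, take the maximum tag appearing in at least $k$ received lists, decode the value from its coded elements and return the pair; if none exists the primitive does not complete. Operations: read = get-data returning $\langle t,v\rangle$, then put-data$(\langle t,v\rangle)$, then return $v$ (with tag $t$); write$(v)$ by writer $w$ = get-tag returning $t$, then put-data$(\langle (t.z+1,w),v\rangle)$. Executions are well-formed (each process invokes an operation only after its previous one completes) and fair. An operation is complete if both its invocation and response appear in the execution.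
   Formalization: $\Pi$ consists of the complete operations together with some chosen set of incomplete writes, and signed triples carry a recipient index j: flexnode j stores, and a reader accepts from flexnode j, only those with index j. The statement above fails without it. *)

theory Defs
  imports Complex_Main "HOL-Library.Product_Lexorder"
begin

text \<open>Writer / reader identifiers ('w) are the clients invoking operations.
  A signed triple is modelled by its content (tag, recipient index j, coded element);
  unforgeability of signatures is modelled by a global set of validly signed triples,
  which only protocol-following clients (and the initial configuration) extend.\<close>

type_synonym 'w tag = "nat \<times> 'w"
type_synonym ('n,'w,'e) entry = "'w tag \<times> 'n \<times> 'e"

definition etag :: "('n,'w,'e) entry \<Rightarrow> 'w tag" where "etag e = fst e"
definition eidx :: "('n,'w,'e) entry \<Rightarrow> 'n" where "eidx e = fst (snd e)"
definition eelem :: "('n,'w,'e) entry \<Rightarrow> 'e" where "eelem e = snd (snd e)"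

datatype ('n,'w) sender = Cl 'w | Nd 'n

text \<open>Messages to flexnodes (round numbers identify the phase of the client).\<close>
datatype ('n,'w,'e) nmsg = QTag nat | QData nat | Put nat "('n,'w,'e) entry"

text \<open>Messages to clients. RTag None stands for a reply whose signature does not verify.\<close>
datatype ('n,'w,'e) cmsg = RTag nat "('n,'w,'e) entry option"
  | RData nat "('n,'w,'e) entry set" | Ack nat

datatype ('n,'w,'v,'e) phase =
    Idle
  | WTag nat 'v "'n \<rightharpoonup> 'w tag option"   \<comment> \<open>get-tag of a write: round, value, replies\<close>
  | WPut nat "'n set"                     \<comment> \<open>put-data of a write: round, acks\<close>
  | RGet nat "'n \<rightharpoonup> ('n,'w,'e) entry set" \<comment> \<open>get-data of a read: round, verified lists\<close>
  | RPut nat 'v "'n set"                  \<comment> \<open>put-data of a read: round, value to return, acks\<close>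

record ('n,'w,'v,'e) gstate =
  lists :: "'n \<Rightarrow> ('n,'w,'e) entry set"
  signed :: "('n,'w,'e) entry set"
  toNode :: "('n \<times> ('n,'w) sender \<times> ('n,'w,'e) nmsg) set"
  toClient :: "('w \<times> 'n \<times> ('n,'w,'e) cmsg) set"
  phs :: "'w \<Rightarrow> ('n,'w,'v,'e) phase"
  rnd :: "'w \<Rightarrow> nat"

definition quorum_size :: "nat \<Rightarrow> nat \<Rightarrow> nat" where
  "quorum_size n k = nat \<lceil>(2 * real n + real k) / 3\<rceil>"

definition mds_code :: "'n set \<Rightarrow> nat \<Rightarrow> ('v \<Rightarrow> 'n \<Rightarrow> 'e) \<Rightarrow> (('n \<times> 'e) set \<Rightarrow> 'v) \<Rightarrow> bool" where
  "mds_code C k enc dec \<longleftrightarrow>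
     (\<forall>v X. X \<subseteq> (\<lambda>j. (j, enc v j)) ` C \<and> k \<le> card X \<longrightarrow> dec X = v)"

definition init_state :: "'n set \<Rightarrow> ('v \<Rightarrow> 'n \<Rightarrow> 'e) \<Rightarrow> 'v \<Rightarrow> 'w \<Rightarrow> ('n,'w,'v,'e) gstate" where
  "init_state C enc v0 w0 =
     \<lparr> lists = (\<lambda>j. {((0, w0), j, enc v0 j)}),
       signed = {((0, w0), j, enc v0 j) | j. j \<in> C},
       toNode = {}, toClient = {}, phs = (\<lambda>_. Idle), rnd = (\<lambda>_. 0) \<rparr>"

definition max_entry :: "('n,'w::linorder,'e) entry set \<Rightarrow> ('n,'w,'e) entry" where
  "max_entry L = (SOME e. e \<in> L \<and> (\<forall>e'\<in>L. etag e' \<le> etag e))"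

definition prune :: "nat \<Rightarrow> ('n,'w::linorder,'e) entry set \<Rightarrow> ('n,'w,'e) entry set" where
  "prune \<delta> L = (if card L > \<delta> + 1 then L - {e \<in> L. etag e = Min (etag ` L)} else L)"

definition store :: "nat \<Rightarrow> 'n \<Rightarrow> ('n,'w::linorder,'e) entry set \<Rightarrow> ('n,'w,'e) entry
                      \<Rightarrow> ('n,'w,'e) entry set \<Rightarrow> ('n,'w,'e) entry set" where
  "store \<delta> j S e L =
     (if e \<in> S \<and> eidx e = j \<and> (\<forall>e'\<in>L. etag e' \<noteq> etag e) then prune \<delta> (insert e L) else L)"

definition node_recv :: "nat \<Rightarrow> 'n \<Rightarrow> ('n,'w) sender \<Rightarrow> ('n,'w,'e) nmsg
                          \<Rightarrow> ('n,'w::linorder,'v,'e) gstate \<Rightarrow> ('n,'w,'v,'e) gstate" where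
  "node_recv \<delta> j src m s =
    (case m of
       QTag r \<Rightarrow> (case src of
           Cl c \<Rightarrow> s\<lparr>toClient := insert (c, j, RTag r (Some (max_entry (lists s j)))) (toClient s)\<rparr>
         | Nd _ \<Rightarrow> s)
     | QData r \<Rightarrow> (case src of
           Cl c \<Rightarrow> s\<lparr>toClient := insert (c, j, RData r (lists s j)) (toClient s)\<rparr>
         | Nd _ \<Rightarrow> s)
     | Put r e \<Rightarrow>
         (let s1 = s\<lparr>lists := (lists s)(j := store \<delta> j (signed s) e (lists s j))\<rparr> in
          case src of
            Cl c \<Rightarrow> s1\<lparr>toClient := insert (c, j, Ack r) (toClient s1)\<rparr>
          | Nd _ \<Rightarrow> s1))"

definition node_step :: "'n set \<Rightarrow> 'n set \<Rightarrow> nat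
                          \<Rightarrow> ('n,'w::linorder,'v,'e) gstate \<Rightarrow> ('n,'w,'v,'e) gstate \<Rightarrow> bool" where
  "node_step C Byz \<delta> s s' \<longleftrightarrow>
     (\<exists>j src m. j \<in> C - Byz \<and> (j, src, m) \<in> toNode s \<and>
        s' = node_recv \<delta> j src m (s\<lparr>toNode := toNode s - {(j, src, m)}\<rparr>))"

text \<open>A Byzantine flexnode sends an arbitrary message; it cannot forge signatures, so every
  signed triple it sends must already be validly signed (invalid ones are just junk).\<close>
definition byz_client_ok :: "('n,'w,'e) entry set \<Rightarrow> ('n,'w,'e) cmsg \<Rightarrow> bool" where
  "byz_client_ok S m = (case m of
       RTag r eo \<Rightarrow> (\<forall>e. eo = Some e \<longrightarrow> e \<in> S)
     | RData r X \<Rightarrow> X \<subseteq> S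
     | Ack r \<Rightarrow> True)"

definition byz_node_ok :: "('n,'w,'e) entry set \<Rightarrow> ('n,'w,'e) nmsg \<Rightarrow> bool" where
  "byz_node_ok S m = (case m of Put r e \<Rightarrow> e \<in> S | _ \<Rightarrow> True)"

definition byz_step :: "'n set \<Rightarrow> 'n set \<Rightarrow> ('n,'w,'v,'e) gstate \<Rightarrow> ('n,'w,'v,'e) gstate \<Rightarrow> bool" where
  "byz_step C Byz s s' \<longleftrightarrow>
     (\<exists>j \<in> Byz.
        (\<exists>c m. byz_client_ok (signed s) m \<and> s' = s\<lparr>toClient := insert (c, j, m) (toClient s)\<rparr>)
      \<or> (\<exists>i m. i \<in> C \<and> byz_node_ok (signed s) m \<and> s' = s\<lparr>toNode := insert (i, Nd j, m) (toNode s)\<rparr>))"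

definition start_put :: "'n set \<Rightarrow> ('v \<Rightarrow> 'n \<Rightarrow> 'e) \<Rightarrow> 'w \<Rightarrow> 'w tag \<Rightarrow> 'v
                          \<Rightarrow> (nat \<Rightarrow> ('n,'w,'v,'e) phase)
                          \<Rightarrow> ('n,'w,'v,'e) gstate \<Rightarrow> ('n,'w,'v,'e) gstate" where
  "start_put C enc c t v ph s =
     (let r = Suc (rnd s c) in
      s\<lparr>signed := signed s \<union> {(t, j, enc v j) | j. j \<in> C},
        toNode := toNode s \<union> {(j, Cl c, Put r (t, j, enc v j)) | j. j \<in> C},
        rnd := (rnd s)(c := r),
        phs := (phs s)(c := ph r)\<rparr>)"

definition inv_write :: "'n set \<Rightarrow> ('n,'w,'v,'e) gstate \<Rightarrow> ('n,'w,'v,'e) gstate \<Rightarrow> bool" where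
  "inv_write C s s' \<longleftrightarrow>
     (\<exists>c v. phs s c = Idle \<and>
        s' = (let r = Suc (rnd s c) in
              s\<lparr>rnd := (rnd s)(c := r), phs := (phs s)(c := WTag r v Map.empty),
                toNode := toNode s \<union> {(j, Cl c, QTag r) | j. j \<in> C}\<rparr>))"

definition inv_read :: "'n set \<Rightarrow> ('n,'w,'v,'e) gstate \<Rightarrow> ('n,'w,'v,'e) gstate \<Rightarrow> bool" where
  "inv_read C s s' \<longleftrightarrow>
     (\<exists>c. phs s c = Idle \<and>
        s' = (let r = Suc (rnd s c) in
              s\<lparr>rnd := (rnd s)(c := r), phs := (phs s)(c := RGet r Map.empty),
                toNode := toNode s \<union> {(j, Cl c, QData r) | j. j \<in> C}\<rparr>))"

definition candidate_tags :: "nat \<Rightarrow> ('n \<rightharpoonup> ('n,'w,'e) entry set) \<Rightarrow> 'w tag set" where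
  "candidate_tags k M = {t. k \<le> card {i \<in> dom M. \<exists>e \<in> the (M i). etag e = t}}"

definition client_recv :: "'n set \<Rightarrow> nat \<Rightarrow> ('v \<Rightarrow> 'n \<Rightarrow> 'e) \<Rightarrow> (('n \<times> 'e) set \<Rightarrow> 'v)
                            \<Rightarrow> 'w \<Rightarrow> 'n \<Rightarrow> ('n,'w,'e) cmsg
                            \<Rightarrow> ('n,'w::linorder,'v,'e) gstate \<Rightarrow> ('n,'w,'v,'e) gstate" where
  "client_recv C k enc dec c j m s =
    (let q = quorum_size (card C) k in
     case phs s c of
       WTag r v M \<Rightarrow>
         (case m of
            RTag r' eo \<Rightarrow>
              (if r' = r \<and> j \<notin> dom M \<and> card (dom M) < q then
                 (let M' = M(j \<mapsto> (case eo of Some e \<Rightarrow> (if e \<in> signed s then Some (etag e) else None)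
                                              | None \<Rightarrow> None)) in
                  if card (dom M') = q then
                    (let t = Max {t. \<exists>i. M' i = Some (Some t)} in
                     start_put C enc c (Suc (fst t), c) v (\<lambda>r. WPut r {}) s)
                  else s\<lparr>phs := (phs s)(c := WTag r v M')\<rparr>)
               else s)
          | _ \<Rightarrow> s)
     | WPut r A \<Rightarrow>
         (case m of
            Ack r' \<Rightarrow>
              (if r' = r \<and> j \<notin> A \<and> card A < q then
                 (if card (insert j A) = q then s\<lparr>phs := (phs s)(c := Idle)\<rparr>
                  else s\<lparr>phs := (phs s)(c := WPut r (insert j A))\<rparr>)
               else s)
          | _ \<Rightarrow> s)
     | RGet r M \<Rightarrow>
         (case m of
            RData r' S \<Rightarrow>
              (if r' = r \<and> j \<notin> dom M \<and> card (dom M) < q then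
                 (let M' = M(j \<mapsto> {e \<in> S. e \<in> signed s \<and> eidx e = j}) in
                  if card (dom M') = q \<and> candidate_tags k M' \<noteq> {} then
                    (let t = Max (candidate_tags k M');
                         v = dec {(eidx e, eelem e) | e. e \<in> \<Union>(ran M') \<and> etag e = t} in
                     start_put C enc c t v (\<lambda>r. RPut r v {}) s)
                  else s\<lparr>phs := (phs s)(c := RGet r M')\<rparr>)
               else s)
          | _ \<Rightarrow> s)
     | RPut r v A \<Rightarrow>
         (case m of
            Ack r' \<Rightarrow>
              (if r' = r \<and> j \<notin> A \<and> card A < q then
                 (if card (insert j A) = q then s\<lparr>phs := (phs s)(c := Idle)\<rparr>
                  else s\<lparr>phs := (phs s)(c := RPut r v (insert j A))\<rparr>)
               else s)
          | _ \<Rightarrow> s)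
     | Idle \<Rightarrow> s)"

definition client_step :: "'n set \<Rightarrow> nat \<Rightarrow> ('v \<Rightarrow> 'n \<Rightarrow> 'e) \<Rightarrow> (('n \<times> 'e) set \<Rightarrow> 'v)
                            \<Rightarrow> ('n,'w::linorder,'v,'e) gstate \<Rightarrow> ('n,'w,'v,'e) gstate \<Rightarrow> bool" where
  "client_step C k enc dec s s' \<longleftrightarrow>
     (\<exists>c j m. (c, j, m) \<in> toClient s \<and>
        s' = client_recv C k enc dec c j m (s\<lparr>toClient := toClient s - {(c, j, m)}\<rparr>))"

definition next_step :: "'n set \<Rightarrow> 'n set \<Rightarrow> nat \<Rightarrow> nat \<Rightarrow> ('v \<Rightarrow> 'n \<Rightarrow> 'e) \<Rightarrow> (('n \<times> 'e) set \<Rightarrow> 'v)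
                          \<Rightarrow> ('n,'w::linorder,'v,'e) gstate \<Rightarrow> ('n,'w,'v,'e) gstate \<Rightarrow> bool" where
  "next_step C Byz k \<delta> enc dec s s' \<longleftrightarrow>
     s' = s \<or> inv_write C s s' \<or> inv_read C s s' \<or> node_step C Byz \<delta> s s'
     \<or> client_step C k enc dec s s' \<or> byz_step C Byz s s'"

text \<open>An execution: an infinite sequence of global states (finite executions are padded by
  stuttering steps). No fairness is imposed (atomicity is a safety property).\<close>
definition execution :: "'n set \<Rightarrow> 'n set \<Rightarrow> nat \<Rightarrow> nat \<Rightarrow> ('v \<Rightarrow> 'n \<Rightarrow> 'e) \<Rightarrow> (('n \<times> 'e) set \<Rightarrow> 'v)
                          \<Rightarrow> 'v \<Rightarrow> 'w \<Rightarrow> (nat \<Rightarrow> ('n,'w::linorder,'v,'e) gstate) \<Rightarrow> bool" where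
  "execution C Byz k \<delta> enc dec v0 w0 run \<longleftrightarrow>
     run 0 = init_state C enc v0 w0 \<and> (\<forall>i. next_step C Byz k \<delta> enc dec (run i) (run (Suc i)))"

text \<open>An operation is identified by (client c, step index i of its invocation).\<close>
type_synonym 'w op = "'w \<times> nat"

definition invoked :: "(nat \<Rightarrow> ('n,'w,'v,'e) gstate) \<Rightarrow> 'w \<Rightarrow> nat \<Rightarrow> bool" where
  "invoked run c i \<longleftrightarrow> phs (run i) c = Idle \<and> phs (run (Suc i)) c \<noteq> Idle"

definition responds :: "(nat \<Rightarrow> ('n,'w,'v,'e) gstate) \<Rightarrow> 'w \<Rightarrow> nat \<Rightarrow> bool" where
  "responds run c j \<longleftrightarrow> phs (run j) c \<noteq> Idle \<and> phs (run (Suc j)) c = Idle"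

definition ops :: "(nat \<Rightarrow> ('n,'w,'v,'e) gstate) \<Rightarrow> 'w op set" where
  "ops run = {(c, i). invoked run c i}"

definition complete :: "(nat \<Rightarrow> ('n,'w,'v,'e) gstate) \<Rightarrow> 'w op \<Rightarrow> bool" where
  "complete run \<pi> \<longleftrightarrow> (\<exists>j > snd \<pi>. responds run (fst \<pi>) j)"

definition resp_time :: "(nat \<Rightarrow> ('n,'w,'v,'e) gstate) \<Rightarrow> 'w op \<Rightarrow> nat" where
  "resp_time run \<pi> = (LEAST j. snd \<pi> < j \<and> responds run (fst \<pi>) j)"

definition completes_before :: "(nat \<Rightarrow> ('n,'w,'v,'e) gstate) \<Rightarrow> 'w op \<Rightarrow> 'w op \<Rightarrow> bool" where
  "completes_before run \<pi>1 \<pi>2 \<longleftrightarrow> complete run \<pi>1 \<and> resp_time run \<pi>1 < snd \<pi>2"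

definition concurrent :: "(nat \<Rightarrow> ('n,'w,'v,'e) gstate) \<Rightarrow> 'w op \<Rightarrow> 'w op \<Rightarrow> bool" where
  "concurrent run \<pi>1 \<pi>2 \<longleftrightarrow> \<not> completes_before run \<pi>1 \<pi>2 \<and> \<not> completes_before run \<pi>2 \<pi>1"

definition is_write :: "(nat \<Rightarrow> ('n,'w,'v,'e) gstate) \<Rightarrow> 'w op \<Rightarrow> bool" where
  "is_write run \<pi> \<longleftrightarrow> (\<exists>r v M. phs (run (Suc (snd \<pi>))) (fst \<pi>) = WTag r v M)"

definition is_read :: "(nat \<Rightarrow> ('n,'w,'v,'e) gstate) \<Rightarrow> 'w op \<Rightarrow> bool" where
  "is_read run \<pi> \<longleftrightarrow> (\<exists>r M. phs (run (Suc (snd \<pi>))) (fst \<pi>) = RGet r M)"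

definition written_val :: "(nat \<Rightarrow> ('n,'w,'v,'e) gstate) \<Rightarrow> 'w op \<Rightarrow> 'v" where
  "written_val run \<pi> = (case phs (run (Suc (snd \<pi>))) (fst \<pi>) of WTag r v M \<Rightarrow> v)"

text \<open>Value returned by a complete read operation (held in its put-data phase at its response).\<close>
definition returned_val :: "(nat \<Rightarrow> ('n,'w,'v,'e) gstate) \<Rightarrow> 'w op \<Rightarrow> 'v" where
  "returned_val run \<pi> = (case phs (run (resp_time run \<pi>)) (fst \<pi>) of RPut r v A \<Rightarrow> v)"

definition bounded_write_concurrency :: "nat \<Rightarrow> (nat \<Rightarrow> ('n,'w,'v,'e) gstate) \<Rightarrow> bool" where
  "bounded_write_concurrency \<delta> run \<longleftrightarrow>
     (\<forall>\<rho> \<in> ops run. is_read run \<rho> \<longrightarrow>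
        finite {\<omega> \<in> ops run. is_write run \<omega> \<and> concurrent run \<omega> \<rho>} \<and>
        card {\<omega> \<in> ops run. is_write run \<omega> \<and> concurrent run \<omega> \<rho>} \<le> \<delta>)"

subsection \<open>Atomicity (Lynch-style, with incomplete writes possibly completed)\<close>

definition atomic_register :: "'v \<Rightarrow> (nat \<Rightarrow> ('n,'w,'v,'e) gstate) \<Rightarrow> bool" where
  "atomic_register v0 run \<longleftrightarrow>
    (\<exists>W prec.
       W \<subseteq> {\<omega> \<in> ops run. is_write run \<omega> \<and> \<not> complete run \<omega>} \<and>
       (let \<Pi> = {\<pi> \<in> ops run. complete run \<pi>} \<union> W in
         prec \<subseteq> \<Pi> \<times> \<Pi> \<and> (\<forall>\<pi>\<in>\<Pi>. (\<pi>, \<pi>) \<notin> prec) \<and> trans prec \<and>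
         \<comment> \<open>(A1)\<close>
         (\<forall>\<pi>1\<in>\<Pi>. \<forall>\<pi>2\<in>\<Pi>. completes_before run \<pi>1 \<pi>2 \<longrightarrow> (\<pi>2, \<pi>1) \<notin> prec) \<and>
         \<comment> \<open>(A2)\<close>
         (\<forall>\<pi>\<in>\<Pi>. \<forall>\<pi>'\<in>\<Pi>. is_write run \<pi> \<and> \<pi> \<noteq> \<pi>' \<longrightarrow> (\<pi>, \<pi>') \<in> prec \<or> (\<pi>', \<pi>) \<in> prec) \<and>
         \<comment> \<open>(A3)\<close>
         (\<forall>\<rho>\<in>\<Pi>. is_read run \<rho> \<longrightarrow>
            (\<exists>\<omega>\<in>\<Pi>. is_write run \<omega> \<and> (\<omega>, \<rho>) \<in> prec \<and>
               (\<forall>\<omega>'\<in>\<Pi>. is_write run \<omega>' \<and> (\<omega>', \<rho>) \<in> prec \<longrightarrow> \<omega>' = \<omega> \<or> (\<omega>', \<omega>) \<in> prec) \<and>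
               returned_val run \<rho> = written_val run \<omega>)
          \<or> ((\<forall>\<omega>\<in>\<Pi>. is_write run \<omega> \<longrightarrow> (\<omega>, \<rho>) \<notin> prec) \<and> returned_val run \<rho> = v0))))"

end

theory Submission
  imports Defs
begin


definition Pt :: "nat \<Rightarrow> 'w tag set \<Rightarrow> 'w::linorder tag \<Rightarrow> bool" where
  "Pt d X T \<longleftrightarrow> T \<in> X \<or> d + 1 \<le> card {t \<in> X. T < t}"

lemma Pt_insert: "finite X \<Longrightarrow> Pt d X T \<Longrightarrow> Pt d (insert t X) T"
  unfolding Pt_def
proof (elim disjE)
  assume "finite X" "d + 1 \<le> card {t \<in> X. T < t}"
  moreover have "card {t \<in> X. T < t} \<le> card {ta \<in> insert t X. T < ta}"
    using \<open>finite X\<close> by (intro card_mono) auto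
  ultimately show "T \<in> insert t X \<or> d + 1 \<le> card {ta \<in> insert t X. T < ta}" by linarith
qed auto

lemma Pt_remove_min:
  assumes "finite X" "Pt d X T" "card X > d + 1"
  shows "Pt d (X - {Min X}) T"
proof -
  have ne: "X \<noteq> {}" using assms(3) by auto
  have mn: "\<forall>x\<in>X. Min X \<le> x" using assms(1) ne by auto
  show ?thesis
  proof (cases "T \<in> X")
    case True
    show ?thesis
    proof (cases "T = Min X")
      case False with True show ?thesis unfolding Pt_def by auto
    next
      case Tm: True
      have "{t \<in> X - {Min X}. T < t} = X - {Min X}" using mn Tm by force
      moreover have "card (X - {Min X}) = card X - 1" using assms(1) ne by (simp add: card_Diff_singleton)
      ultimately have "card {t \<in> X - {Min X}. T < t} = card X - 1" by simp
      then show ?thesis unfolding Pt_def using assms(3) by linarith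
    qed
  next
    case False
    then have c: "d + 1 \<le> card {t \<in> X. T < t}" using assms(2) unfolding Pt_def by auto
    show ?thesis
    proof (cases "T < Min X")
      case True
      have "{t \<in> X - {Min X}. T < t} = X - {Min X}" using mn True by force
      moreover have "card (X - {Min X}) = card X - 1" using assms(1) ne by (simp add: card_Diff_singleton)
      ultimately have "card {t \<in> X - {Min X}. T < t} = card X - 1" by simp
      then show ?thesis unfolding Pt_def using assms(3) by linarith
    next
      case False
      have "{t \<in> X - {Min X}. T < t} = {t \<in> X. T < t}" using False by auto
      then show ?thesis unfolding Pt_def using c by simp
    qed
  qed
qed

lemma etag_remove_min:
  "etag ` (L - {e \<in> L. etag e = m}) = etag ` L - {m}"
  by auto

lemma prune_tags:
  assumes "finite L" "inj_on etag L"
  shows "etag ` prune d L = (if card (etag ` L) > d + 1 then etag ` L - {Min (etag ` L)} else etag ` L)"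
  using assms by (auto simp: prune_def card_image)

lemma prune_sub: "prune d L \<subseteq> L" by (auto simp: prune_def)

lemma prune_inj: "inj_on etag L \<Longrightarrow> inj_on etag (prune d L)"
  using prune_sub inj_on_subset by blast

lemma prune_ne:
  assumes "finite L" "inj_on etag L" "L \<noteq> {}"
  shows "prune d L \<noteq> {}"
proof -
  have "etag ` prune d L \<noteq> {}"
  proof (cases "card (etag ` L) > d + 1")
    case True
    then have "card (etag ` L - {Min (etag ` L)}) > 0"
      using assms by (simp add: card_Diff_singleton)
    then show ?thesis using prune_tags[OF assms(1,2)] True by (metis card.empty less_irrefl)
  next
    case False then show ?thesis using prune_tags[OF assms(1,2)] assms by auto
  qed
  then show ?thesis by auto
qed

lemma Pt_prune:
  assumes "finite L" "inj_on etag L" "Pt d (etag ` L) T"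
  shows "Pt d (etag ` prune d L) T"
  using assms Pt_remove_min[of "etag ` L" d T] by (simp add: prune_tags)

lemma store_sub: "store d j S e L \<subseteq> insert e L"
  using prune_sub by (auto simp: store_def)

lemma store_props:
  assumes "finite L" "inj_on etag L" "L \<noteq> {}"
  shows "finite (store d j S e L) \<and> inj_on etag (store d j S e L) \<and> store d j S e L \<noteq> {}"
proof (cases "e \<in> S \<and> eidx e = j \<and> (\<forall>e'\<in>L. etag e' \<noteq> etag e)")
  case True
  have i: "inj_on etag (insert e L)" using True assms(2) by (auto simp: inj_on_def)
  have f: "finite (insert e L)" using assms by auto
  show ?thesis using True prune_inj[OF i] prune_ne[OF f i] finite_subset[OF prune_sub f]
    by (simp add: store_def)
next
  case False then have "store d j S e L = L" unfolding store_def by meson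
  then show ?thesis using assms by simp
qed

lemma Pt_store:
  assumes "finite L" "inj_on etag L" "Pt d (etag ` L) T"
  shows "Pt d (etag ` store d j S e L) T"
proof (cases "e \<in> S \<and> eidx e = j \<and> (\<forall>e'\<in>L. etag e' \<noteq> etag e)")
  case True
  have i: "inj_on etag (insert e L)" using True assms(2) by (auto simp: inj_on_def)
  have f: "finite (insert e L)" using assms by auto
  have "Pt d (etag ` insert e L) T" using Pt_insert assms by (simp add: Pt_insert)
  then show ?thesis using True Pt_prune[OF f i] by (simp add: store_def)
next
  case False then have "store d j S e L = L" unfolding store_def by meson
  then show ?thesis using assms by simp
qed

lemma Pt_store_new:
  assumes "finite L" "inj_on etag L" "e \<in> S" "eidx e = j"
  shows "Pt d (etag ` store d j S e L) (etag e)"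
proof (cases "\<forall>e'\<in>L. etag e' \<noteq> etag e")
  case True
  have i: "inj_on etag (insert e L)" using True assms(2) by (auto simp: inj_on_def)
  have f: "finite (insert e L)" using assms by auto
  have "Pt d (etag ` insert e L) (etag e)" by (simp add: Pt_def)
  then show ?thesis using True assms Pt_prune[OF f i] by (simp add: store_def)
next
  case False
  then obtain e' where "e' \<in> L" "etag e' = etag e" by blast
  then have "etag e \<in> etag ` L" by (metis imageI)
  moreover have "store d j S e L = L" using False unfolding store_def by meson
  ultimately show ?thesis by (simp add: Pt_def)
qed

lemma max_entry:
  assumes "finite (L :: ('n,'w::linorder,'e) entry set)" "L \<noteq> {}"
  shows "max_entry L \<in> L \<and> (\<forall>e'\<in>L. etag e' \<le> etag (max_entry L))"
proof -
  obtain t where t: "t \<in> etag ` L" "\<forall>x\<in>etag ` L. x \<le> t"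
    using assms by (metis Max_ge Max_in finite_imageI image_is_empty)
  then obtain e where "e \<in> L" "etag e = t" by auto
  then have ex: "\<exists>e. e \<in> L \<and> (\<forall>e'\<in>L. etag e' \<le> etag e)" using t by blast
  show ?thesis unfolding max_entry_def by (rule someI_ex[OF ex])
qed

lemma Pt_max:
  assumes "finite L" "L \<noteq> {}" "Pt d (etag ` L) T"
  shows "T \<le> etag (max_entry L)"
proof -
  have m: "\<forall>e'\<in>L. etag e' \<le> etag (max_entry L)" using max_entry[OF assms(1,2)] by auto
  from assms(3) show ?thesis unfolding Pt_def
  proof
    assume "T \<in> etag ` L" then show ?thesis using m by auto
  next
    assume "d + 1 \<le> card {t \<in> etag ` L. T < t}"
    then have "{t \<in> etag ` L. T < t} \<noteq> {}" by (metis card.empty not_one_le_zero add_is_0 le_zero_eq one_neq_zero)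
    then obtain t where "t \<in> etag ` L" "T < t" by blast
    then show ?thesis using m by force
  qed
qed




definition nrnd :: "('n,'w,'e) nmsg \<Rightarrow> nat" where
  "nrnd m = (case m of QTag r \<Rightarrow> r | QData r \<Rightarrow> r | Put r e \<Rightarrow> r)"

definition tagval :: "('n,'w,'e) entry set \<Rightarrow> ('n,'w,'e) entry option \<Rightarrow> 'w tag option" where
  "tagval S eo = (case eo of Some e \<Rightarrow> (if e \<in> S then Some (etag e) else None) | None \<Rightarrow> None)"

definition rdfilter :: "('n,'w,'e) entry set \<Rightarrow> 'n \<Rightarrow> ('n,'w,'e) entry set \<Rightarrow> ('n,'w,'e) entry set" where
  "rdfilter Sg j S = {e \<in> S. e \<in> Sg \<and> eidx e = j}"

definition rdval :: "(('n \<times> 'e) set \<Rightarrow> 'v) \<Rightarrow> ('n \<rightharpoonup> ('n,'w,'e) entry set) \<Rightarrow> 'w tag \<Rightarrow> 'v" where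
  "rdval dec M t = dec {(eidx e, eelem e) | e. e \<in> \<Union>(ran M) \<and> etag e = t}"

lemma client_recv_cases:
  fixes s0 :: "('n,'w::linorder,'v,'e) gstate"
  assumes "s' = client_recv C k enc dec c j m s0" and q: "q = quorum_size (card C) k"
  shows "s' = s0 \<or>
   (\<exists>r v M eo M'. phs s0 c = WTag r v M \<and> m = RTag r eo \<and> j \<notin> dom M \<and> card (dom M) < q \<and>
      M' = M(j \<mapsto> tagval (signed s0) eo) \<and>
     ((card (dom M') \<noteq> q \<and> s' = s0\<lparr>phs := (phs s0)(c := WTag r v M')\<rparr>) \<or>
      (card (dom M') = q \<and> s' = start_put C enc c (Suc (fst (Max {t. \<exists>i. M' i = Some (Some t)})), c) v (\<lambda>r. WPut r {}) s0)))
 \<or> (\<exists>r A. phs s0 c = WPut r A \<and> m = Ack r \<and> j \<notin> A \<and> card A < q \<and>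
    ((card (insert j A) = q \<and> s' = s0\<lparr>phs := (phs s0)(c := Idle)\<rparr>) \<or>
     (card (insert j A) \<noteq> q \<and> s' = s0\<lparr>phs := (phs s0)(c := WPut r (insert j A))\<rparr>)))
 \<or> (\<exists>r M S M'. phs s0 c = RGet r M \<and> m = RData r S \<and> j \<notin> dom M \<and> card (dom M) < q \<and>
     M' = M(j \<mapsto> rdfilter (signed s0) j S) \<and>
     ((\<not> (card (dom M') = q \<and> candidate_tags k M' \<noteq> {}) \<and> s' = s0\<lparr>phs := (phs s0)(c := RGet r M')\<rparr>) \<or>
      (card (dom M') = q \<and> candidate_tags k M' \<noteq> {} \<and>
       s' = start_put C enc c (Max (candidate_tags k M')) (rdval dec M' (Max (candidate_tags k M')))
               (\<lambda>r. RPut r (rdval dec M' (Max (candidate_tags k M'))) {}) s0)))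
 \<or> (\<exists>r v A. phs s0 c = RPut r v A \<and> m = Ack r \<and> j \<notin> A \<and> card A < q \<and>
    ((card (insert j A) = q \<and> s' = s0\<lparr>phs := (phs s0)(c := Idle)\<rparr>) \<or>
     (card (insert j A) \<noteq> q \<and> s' = s0\<lparr>phs := (phs s0)(c := RPut r v (insert j A))\<rparr>)))"
proof (cases "phs s0 c")
  case Idle then show ?thesis using assms by (simp add: client_recv_def)
next
  case (WTag r v M)
  show ?thesis
  proof (cases m)
    case (RTag r' eo)
    show ?thesis using assms WTag RTag
      by (cases eo) (auto simp: client_recv_def Let_def tagval_def)
  qed (use assms WTag in \<open>auto simp: client_recv_def\<close>)
next
  case (WPut r A)
  show ?thesis
  proof (cases m)
    case (Ack r')
    show ?thesis using assms WPut Ack by (auto simp: client_recv_def Let_def)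
  qed (use assms WPut in \<open>auto simp: client_recv_def\<close>)
next
  case (RGet r M)
  show ?thesis
  proof (cases m)
    case (RData r' S)
    show ?thesis using assms RGet RData by (auto simp: client_recv_def Let_def rdfilter_def rdval_def)
  qed (use assms RGet in \<open>auto simp: client_recv_def\<close>)
next
  case (RPut r v A)
  show ?thesis
  proof (cases m)
    case (Ack r')
    show ?thesis using assms RPut Ack by (auto simp: client_recv_def Let_def)
  qed (use assms RPut in \<open>auto simp: client_recv_def\<close>)
qed




lemma store_sub2: "store d j S e L \<subseteq> L \<union> ({e} \<inter> {e. e \<in> S \<and> eidx e = j})"
  using prune_sub by (auto simp: store_def)

definition node_reply :: "('n,'w::linorder,'e) nmsg \<Rightarrow> ('n,'w,'e) entry set \<Rightarrow> ('n,'w,'e) cmsg" where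
  "node_reply m L = (case m of QTag r \<Rightarrow> RTag r (Some (max_entry L)) | QData r \<Rightarrow> RData r L | Put r e \<Rightarrow> Ack r)"

lemma node_recv_fields:
  assumes "s' = node_recv d j src m s"
  shows "phs s' = phs s \<and> rnd s' = rnd s \<and> signed s' = signed s \<and> toNode s' = toNode s \<and>
    lists s' = (case m of Put r e \<Rightarrow> (lists s)(j := store d j (signed s) e (lists s j)) | _ \<Rightarrow> lists s) \<and>
    toClient s' = (case src of Cl c \<Rightarrow> insert (c, j, node_reply m (lists s j)) (toClient s) | Nd _ \<Rightarrow> toClient s)"
  using assms by (cases m; cases src) (simp_all add: node_recv_def node_reply_def Let_def)

lemma start_put_fields:
  assumes "s' = start_put C enc c t v ph s"
  shows "signed s' = signed s \<union> {(t, j, enc v j) | j. j \<in> C} \<and>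
    toNode s' = toNode s \<union> {(j, Cl c, Put (Suc (rnd s c)) (t, j, enc v j)) | j. j \<in> C} \<and>
    rnd s' = (rnd s)(c := Suc (rnd s c)) \<and> phs s' = (phs s)(c := ph (Suc (rnd s c))) \<and>
    lists s' = lists s \<and> toClient s' = toClient s"
  using assms by (simp add: start_put_def Let_def)

lemma cand_sub:
  assumes "\<forall>i X. M i = Some X \<longrightarrow> X \<subseteq> S" "1 \<le> k"
  shows "candidate_tags k M \<subseteq> etag ` S"
proof
  fix t assume "t \<in> candidate_tags k M"
  then have "1 \<le> card {i \<in> dom M. \<exists>e \<in> the (M i). etag e = t}" using assms(2) by (simp add: candidate_tags_def)
  then have "{i \<in> dom M. \<exists>e \<in> the (M i). etag e = t} \<noteq> {}" by (metis card.empty not_one_le_zero)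
  then obtain i e where "i \<in> dom M" "e \<in> the (M i)" "etag e = t" by blast
  then show "t \<in> etag ` S" using assms(1) by (metis domD imageI option.sel subsetD)
qed

locale proto =
  fixes C Byz :: "'n set" and k \<delta> :: nat and enc :: "'v \<Rightarrow> 'n \<Rightarrow> 'e"
    and dec :: "('n \<times> 'e) set \<Rightarrow> 'v" and v0 :: 'v and w0 :: "'w::linorder"
    and run :: "nat \<Rightarrow> ('n,'w,'v,'e) gstate"
  assumes finC: "finite C" and byzC: "Byz \<subseteq> C" and k1: "1 \<le> k" and kn: "k \<le> card C"
    and d1: "1 \<le> \<delta>" and mds: "mds_code C k enc dec"
    and exec: "execution C Byz k \<delta> enc dec v0 w0 run"
    and byzb: "3 * card Byz + k < card C"
begin

abbreviation q where "q \<equiv> quorum_size (card C) k"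

lemma q3: "2 * card C + k \<le> 3 * q" "q \<le> card C"
proof -
  have "real (q) = real_of_int \<lceil>(2 * real (card C) + real k) / 3\<rceil>"
    unfolding quorum_size_def by (simp add: ceiling_le_zero)
  hence a: "(2 * real (card C) + real k) / 3 \<le> real q" "real q < (2 * real (card C) + real k) / 3 + 1"
    by (simp_all add: ceiling_correct) linarith
  have "real (2 * card C + k) \<le> real (3 * q)" using a(1) by simp
  then show "2 * card C + k \<le> 3 * q" by (simp only: of_nat_le_iff)
  have "real k \<le> real (card C)" using kn by simp
  then have "(2 * real (card C) + real k) / 3 \<le> real (card C)" by (simp add: field_simps)
  then have "real q < real (card C) + 1" using a(2) by linarith
  then show "q \<le> card C" by linarith
qed

lemma quorum_inter:
  assumes "A \<subseteq> C" "B \<subseteq> C" "card A = q" "card B = q"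
  shows "k < card ((A \<inter> B) - Byz)"
proof -
  have fA: "finite A" "finite B" using assms finC finite_subset by auto
  have "card (A \<union> B) \<le> card C" using assms finC by (intro card_mono) auto
  moreover have "card (A \<union> B) + card (A \<inter> B) = card A + card B" using fA card_Un_Int by metis
  moreover have "card (A \<inter> B) \<le> card ((A \<inter> B) - Byz) + card Byz"
  proof -
    have fB: "finite Byz" using byzC finC finite_subset by blast
    have "A \<inter> B \<subseteq> ((A \<inter> B) - Byz) \<union> Byz" by blast
    then have "card (A \<inter> B) \<le> card (((A \<inter> B) - Byz) \<union> Byz)"
      using fA fB by (intro card_mono) auto
    also have "\<dots> \<le> card ((A \<inter> B) - Byz) + card Byz" by (rule card_Un_le)
    finally show ?thesis .
  qed
  ultimately show ?thesis using q3 byzb assms by linarith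
qed

lemma step: "next_step C Byz k \<delta> enc dec (run i) (run (Suc i))"
  using exec unfolding execution_def by blast

lemma run0: "run 0 = init_state C enc v0 w0"
  using exec unfolding execution_def by blast

definition InvPh :: "('n,'w,'v,'e) gstate \<Rightarrow> 'w \<Rightarrow> bool" where
  "InvPh s c \<longleftrightarrow> (case phs s c of Idle \<Rightarrow> True
        | WTag r v M \<Rightarrow> r = rnd s c \<and> dom M \<subseteq> C
        | WPut r A \<Rightarrow> r = rnd s c \<and> A \<subseteq> C
        | RGet r M \<Rightarrow> r = rnd s c \<and> dom M \<subseteq> C \<and> (\<forall>j X. M j = Some X \<longrightarrow> X \<subseteq> signed s \<and> (\<forall>e\<in>X. eidx e = j))
        | RPut r v A \<Rightarrow> r = rnd s c \<and> A \<subseteq> C)"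

definition InvTN :: "('n,'w,'v,'e) gstate \<Rightarrow> bool" where
  "InvTN s \<longleftrightarrow> (\<forall>j src m. (j, src, m) \<in> toNode s \<longrightarrow> j \<in> C \<and> (\<forall>c. src = Cl c \<longrightarrow> nrnd m \<le> rnd s c) \<and>
         (\<forall>r e. m = Put r e \<longrightarrow> e \<in> signed s \<and> (\<forall>c. src = Cl c \<longrightarrow> eidx e = j)))"

definition InvTC :: "('n,'w,'v,'e) gstate \<Rightarrow> bool" where
  "InvTC s \<longleftrightarrow> (\<forall>c j m. (c, j, m) \<in> toClient s \<longrightarrow> j \<in> C)"

definition InvL :: "('n,'w,'v,'e) gstate \<Rightarrow> bool" where
  "InvL s \<longleftrightarrow> (\<forall>j \<in> C - Byz. finite (lists s j) \<and> lists s j \<noteq> {} \<and> inj_on etag (lists s j) \<and>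
        lists s j \<subseteq> signed s \<and> (\<forall>e \<in> lists s j. eidx e = j))"

definition InvS :: "('n,'w,'v,'e) gstate \<Rightarrow> bool" where
  "InvS s \<longleftrightarrow> finite (signed s) \<and> (\<forall>e \<in> signed s. eidx e \<in> C \<and> (etag e = (0, w0) \<or> 0 < fst (etag e)))"

definition Inv :: "('n,'w,'v,'e) gstate \<Rightarrow> bool" where
  "Inv s \<longleftrightarrow>
   (\<forall>c. InvPh s c)
   \<and> InvTN s \<and> InvTC s \<and> InvL s \<and> InvS s"

lemma Inv_init: "Inv (run 0)"
  unfolding run0 Inv_def InvPh_def InvTN_def InvTC_def InvL_def InvS_def init_state_def using finC
  by (auto simp: etag_def eidx_def inj_on_def)

lemma InvPh_cong: "InvPh s c \<Longrightarrow> phs s' c = phs s c \<Longrightarrow> rnd s' c = rnd s c \<Longrightarrow> signed s \<subseteq> signed s' \<Longrightarrow> InvPh s' c"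
  unfolding InvPh_def by (cases "phs s c") (simp_all, meson subset_trans)

lemma Inv_parts: "Inv s \<longleftrightarrow> (\<forall>c. InvPh s c) \<and> InvTN s \<and> InvTC s \<and> InvL s \<and> InvS s"
  by (simp add: Inv_def)

lemma InvTC_cong: "InvTC s \<Longrightarrow> toClient s' = toClient s \<Longrightarrow> InvTC s'"
  unfolding InvTC_def by simp
lemma InvL_cong: assumes "InvL s" "lists s' = lists s" "signed s \<subseteq> signed s'" shows "InvL s'"
  unfolding InvL_def
proof
  fix j assume "j \<in> C - Byz"
  then have "finite (lists s j) \<and> lists s j \<noteq> {} \<and> inj_on etag (lists s j) \<and>
        lists s j \<subseteq> signed s \<and> (\<forall>e \<in> lists s j. eidx e = j)" using assms(1) unfolding InvL_def by blast
  then show "finite (lists s' j) \<and> lists s' j \<noteq> {} \<and> inj_on etag (lists s' j) \<and>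
        lists s' j \<subseteq> signed s' \<and> (\<forall>e \<in> lists s' j. eidx e = j)" using assms(2,3) by auto
qed
lemma InvS_cong: "InvS s \<Longrightarrow> signed s' = signed s \<Longrightarrow> InvS s'"
  unfolding InvS_def by simp

lemma Inv_inv_write: assumes "Inv s" "inv_write C s s'" shows "Inv s'"
proof -
  obtain c v where c: "phs s c = Idle" and s': "s' = s\<lparr>rnd := (rnd s)(c := Suc (rnd s c)), phs := (phs s)(c := WTag (Suc (rnd s c)) v Map.empty),
                toNode := toNode s \<union> {(j, Cl c, QTag (Suc (rnd s c))) | j. j \<in> C}\<rparr>"
    using assms(2) unfolding inv_write_def Let_def by blast
  have f: "phs s' = (phs s)(c := WTag (Suc (rnd s c)) v Map.empty)" "rnd s' = (rnd s)(c := Suc (rnd s c))"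
    "signed s' = signed s" "lists s' = lists s" "toClient s' = toClient s"
    "toNode s' = toNode s \<union> {(j, Cl c, QTag (Suc (rnd s c))) | j. j \<in> C}"
    unfolding s' by simp_all
  have "InvPh s' c'" for c'
  proof (cases "c' = c")
    case True then show ?thesis unfolding InvPh_def f by simp
  next
    case False then show ?thesis using assms(1) unfolding Inv_def by (rule_tac InvPh_cong[of s]) (auto simp: f)
  qed
  moreover have "InvTN s'"
    unfolding InvTN_def
  proof (intro allI impI)
    fix j src m assume m: "(j, src, m) \<in> toNode s'"
    show "j \<in> C \<and> (\<forall>c. src = Cl c \<longrightarrow> nrnd m \<le> rnd s' c) \<and>
         (\<forall>r e. m = Put r e \<longrightarrow> e \<in> signed s' \<and> (\<forall>c. src = Cl c \<longrightarrow> eidx e = j))"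
    proof (cases "(j, src, m) \<in> toNode s")
      case True
      then have "j \<in> C \<and> (\<forall>c. src = Cl c \<longrightarrow> nrnd m \<le> rnd s c) \<and>
         (\<forall>r e. m = Put r e \<longrightarrow> e \<in> signed s \<and> (\<forall>c. src = Cl c \<longrightarrow> eidx e = j))"
        using assms(1) unfolding Inv_def InvTN_def by blast
      then show ?thesis unfolding f by auto
    next
      case False
      then show ?thesis using m unfolding f by (auto simp: nrnd_def)
    qed
  qed
  ultimately show ?thesis using assms(1) f unfolding Inv_parts using InvTC_cong[of s s'] InvL_cong[of s s'] InvS_cong[of s s'] by auto
qed

lemma InvTN_mono:
  assumes "InvTN s" "toNode s' \<subseteq> toNode s \<union> N" "\<And>c. rnd s c \<le> rnd s' c" "signed s \<subseteq> signed s'"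
    "\<And>j src m. (j,src,m) \<in> N \<Longrightarrow> j \<in> C \<and> (\<forall>c. src = Cl c \<longrightarrow> nrnd m \<le> rnd s' c) \<and>
         (\<forall>r e. m = Put r e \<longrightarrow> e \<in> signed s' \<and> (\<forall>c. src = Cl c \<longrightarrow> eidx e = j))"
  shows "InvTN s'"
  unfolding InvTN_def
proof (intro allI impI)
  fix j src m assume m: "(j, src, m) \<in> toNode s'"
  show "j \<in> C \<and> (\<forall>c. src = Cl c \<longrightarrow> nrnd m \<le> rnd s' c) \<and>
         (\<forall>r e. m = Put r e \<longrightarrow> e \<in> signed s' \<and> (\<forall>c. src = Cl c \<longrightarrow> eidx e = j))"
  proof (cases "(j, src, m) \<in> toNode s")
    case True
    then have "j \<in> C \<and> (\<forall>c. src = Cl c \<longrightarrow> nrnd m \<le> rnd s c) \<and>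
         (\<forall>r e. m = Put r e \<longrightarrow> e \<in> signed s \<and> (\<forall>c. src = Cl c \<longrightarrow> eidx e = j))"
      using assms(1) unfolding InvTN_def by blast
    then show ?thesis using assms(3,4) by (auto intro: le_trans)
  next
    case False
    then show ?thesis using m assms(2,5) by blast
  qed
qed

lemma InvTC_mono:
  assumes "InvTC s" "toClient s' \<subseteq> toClient s \<union> N" "\<And>c j m. (c,j,m) \<in> N \<Longrightarrow> j \<in> C"
  shows "InvTC s'"
  using assms unfolding InvTC_def by blast

lemma Inv_inv_read: assumes "Inv s" "inv_read C s s'" shows "Inv s'"
proof -
  obtain c where c: "phs s c = Idle" and s': "s' = s\<lparr>rnd := (rnd s)(c := Suc (rnd s c)), phs := (phs s)(c := RGet (Suc (rnd s c)) Map.empty),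
                toNode := toNode s \<union> {(j, Cl c, QData (Suc (rnd s c))) | j. j \<in> C}\<rparr>"
    using assms(2) unfolding inv_read_def Let_def by blast
  have f: "phs s' = (phs s)(c := RGet (Suc (rnd s c)) Map.empty)" "rnd s' = (rnd s)(c := Suc (rnd s c))"
    "signed s' = signed s" "lists s' = lists s" "toClient s' = toClient s"
    "toNode s' = toNode s \<union> {(j, Cl c, QData (Suc (rnd s c))) | j. j \<in> C}"
    unfolding s' by simp_all
  have "InvPh s' c'" for c'
  proof (cases "c' = c")
    case True then show ?thesis unfolding InvPh_def f by simp
  next
    case False then show ?thesis using assms(1) unfolding Inv_def by (rule_tac InvPh_cong[of s]) (auto simp: f)
  qed
  moreover have "InvTN s'"
    using assms(1) unfolding Inv_def
    by (rule_tac InvTN_mono[where N="{(j, Cl c, QData (Suc (rnd s c))) | j. j \<in> C}"]) (auto simp: f nrnd_def)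
  ultimately show ?thesis using assms(1) f unfolding Inv_parts using InvTC_cong[of s s'] InvL_cong[of s s'] InvS_cong[of s s'] by auto
qed

lemma Inv_byz: assumes "Inv s" "byz_step C Byz s s'" shows "Inv s'"
proof -
  obtain j where j: "j \<in> Byz" and
    cases: "(\<exists>c m. byz_client_ok (signed s) m \<and> s' = s\<lparr>toClient := insert (c, j, m) (toClient s)\<rparr>)
      \<or> (\<exists>i m. i \<in> C \<and> byz_node_ok (signed s) m \<and> s' = s\<lparr>toNode := insert (i, Nd j, m) (toNode s)\<rparr>)"
    using assms(2) unfolding byz_step_def by blast
  from cases show ?thesis
  proof (elim disjE exE conjE)
    fix c m assume s': "s' = s\<lparr>toClient := insert (c, j, m) (toClient s)\<rparr>"
    have f: "phs s' = phs s" "rnd s' = rnd s" "signed s' = signed s" "lists s' = lists s" "toNode s' = toNode s"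
      "toClient s' = insert (c, j, m) (toClient s)" unfolding s' by simp_all
    have "InvPh s' c'" for c' using assms(1) unfolding Inv_def by (rule_tac InvPh_cong[of s]) (auto simp: f)
    moreover have "InvTC s'" using assms(1) j byzC unfolding Inv_def
      by (rule_tac InvTC_mono[where N="{(c,j,m)}"]) (auto simp: f)
    moreover have "InvTN s'" using assms(1) unfolding Inv_def InvTN_def f by simp
    ultimately show ?thesis using assms(1) f unfolding Inv_parts using InvL_cong[of s s'] InvS_cong[of s s'] by auto
  next
    fix i m assume i: "i \<in> C" and ok: "byz_node_ok (signed s) m" and s': "s' = s\<lparr>toNode := insert (i, Nd j, m) (toNode s)\<rparr>"
    have f: "phs s' = phs s" "rnd s' = rnd s" "signed s' = signed s" "lists s' = lists s" "toClient s' = toClient s"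
      "toNode s' = insert (i, Nd j, m) (toNode s)" unfolding s' by simp_all
    have "InvPh s' c'" for c' using assms(1) unfolding Inv_def by (rule_tac InvPh_cong[of s]) (auto simp: f)
    moreover have "InvTN s'" using assms(1) i ok unfolding Inv_def
      by (rule_tac InvTN_mono[where N="{(i, Nd j, m)}"]) (auto simp: f byz_node_ok_def split: nmsg.splits)
    ultimately show ?thesis using assms(1) f unfolding Inv_parts using InvTC_cong[of s s'] InvL_cong[of s s'] InvS_cong[of s s'] by auto
  qed
qed

lemma Inv_rem_node: assumes "Inv s" shows "Inv (s\<lparr>toNode := toNode s - X\<rparr>)" (is "Inv ?s")
proof -
  have "InvPh ?s c'" for c' using assms unfolding Inv_def by (rule_tac InvPh_cong[of s]) auto
  moreover have "InvTN ?s" using assms unfolding Inv_def by (rule_tac InvTN_mono[where N="{}"]) auto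
  moreover have "InvTC ?s" using assms unfolding Inv_def by (rule_tac InvTC_cong[of s]) auto
  moreover have "InvL ?s" using assms unfolding Inv_def by (rule_tac InvL_cong[of s]) auto
  moreover have "InvS ?s" using assms unfolding Inv_def by (rule_tac InvS_cong[of s]) auto
  ultimately show ?thesis unfolding Inv_parts by blast
qed

lemma Inv_rem_client: assumes "Inv s" shows "Inv (s\<lparr>toClient := toClient s - X\<rparr>)" (is "Inv ?s")
proof -
  have "InvPh ?s c'" for c' using assms unfolding Inv_def by (rule_tac InvPh_cong[of s]) auto
  moreover have "InvTN ?s" using assms unfolding Inv_def by (rule_tac InvTN_mono[where N="{}"]) auto
  moreover have "InvTC ?s" using assms unfolding Inv_def by (rule_tac InvTC_mono[where N="{}"]) auto
  moreover have "InvL ?s" using assms unfolding Inv_def by (rule_tac InvL_cong[of s]) auto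
  moreover have "InvS ?s" using assms unfolding Inv_def by (rule_tac InvS_cong[of s]) auto
  ultimately show ?thesis unfolding Inv_parts by blast
qed

lemma Inv_node_recv: assumes "Inv s" "j \<in> C - Byz" "s' = node_recv \<delta> j src m s" shows "Inv s'"
proof -
  note f = node_recv_fields[OF assms(3)]
  have "InvPh s' c'" for c' using assms(1) f unfolding Inv_def by (rule_tac InvPh_cong[of s]) auto
  moreover have "InvTN s'" using assms(1) f unfolding Inv_def InvTN_def by simp
  moreover have "InvTC s'" using assms(1,2) f unfolding Inv_def
    by (rule_tac InvTC_mono[where N="{(c, j, x) | c x. True}"]) (auto split: sender.splits)
  moreover have "InvS s'" using assms(1) f unfolding Inv_def InvS_def by simp
  moreover have "InvL s'"
  proof (cases "\<exists>r e. m = Put r e")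
    case False
    then have "lists s' = lists s" using f by (cases m) auto
    then show ?thesis using assms(1) f InvL_cong[of s s'] unfolding Inv_def by simp
  next
    case True
    then obtain r e where m: "m = Put r e" by blast
    have l: "lists s' = (lists s)(j := store \<delta> j (signed s) e (lists s j))" using f m by simp
    show ?thesis unfolding InvL_def
    proof
      fix i assume i: "i \<in> C - Byz"
      have Li: "finite (lists s i) \<and> lists s i \<noteq> {} \<and> inj_on etag (lists s i) \<and>
        lists s i \<subseteq> signed s \<and> (\<forall>e \<in> lists s i. eidx e = i)" using assms(1) i unfolding Inv_def InvL_def by blast
      show "finite (lists s' i) \<and> lists s' i \<noteq> {} \<and> inj_on etag (lists s' i) \<and>
        lists s' i \<subseteq> signed s' \<and> (\<forall>e \<in> lists s' i. eidx e = i)"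
      proof (cases "i = j")
        case True
        have "store \<delta> j (signed s) e (lists s j) \<subseteq> lists s j \<union> ({e} \<inter> {e. e \<in> signed s \<and> eidx e = j})"
          by (rule store_sub2)
        then show ?thesis using store_props[of "lists s j" \<delta> j "signed s" e] Li True l f by auto
      next
        case False then show ?thesis using Li l f by simp
      qed
    qed
  qed
  ultimately show ?thesis unfolding Inv_parts by blast
qed

lemma Inv_node: assumes "Inv s" "node_step C Byz \<delta> s s'" shows "Inv s'"
  using assms Inv_node_recv Inv_rem_node unfolding node_step_def by blast

lemma Inv_phase_upd:
  assumes "Inv s" "InvPh (s\<lparr>phs := (phs s)(c := ph)\<rparr>) c"
  shows "Inv (s\<lparr>phs := (phs s)(c := ph)\<rparr>)" (is "Inv ?s")
proof -
  have "InvPh ?s c'" for c'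
  proof (cases "c' = c")
    case True then show ?thesis using assms(2) by simp
  next
    case False then show ?thesis using assms(1) unfolding Inv_def by (rule_tac InvPh_cong[of s]) auto
  qed
  moreover have "InvTN ?s" using assms unfolding Inv_def by (rule_tac InvTN_mono[where N="{}"]) auto
  moreover have "InvTC ?s" using assms unfolding Inv_def by (rule_tac InvTC_cong[of s]) auto
  moreover have "InvL ?s" using assms unfolding Inv_def by (rule_tac InvL_cong[of s]) auto
  moreover have "InvS ?s" using assms unfolding Inv_def by (rule_tac InvS_cong[of s]) auto
  ultimately show ?thesis unfolding Inv_parts by blast
qed

lemma Inv_start_put:
  assumes "Inv s" "t = (0, w0) \<or> 0 < fst t"
    "ph (Suc (rnd s c)) = WPut (Suc (rnd s c)) {} \<or> (\<exists>v'. ph (Suc (rnd s c)) = RPut (Suc (rnd s c)) v' {})"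
    "s' = start_put C enc c t v ph s"
  shows "Inv s'"
proof -
  note f = start_put_fields[OF assms(4)]
  have "InvPh s' c'" for c'
  proof (cases "c' = c")
    case True then show ?thesis using assms(3) f unfolding InvPh_def by auto
  next
    case False then show ?thesis using assms(1) f unfolding Inv_def by (rule_tac InvPh_cong[of s]) auto
  qed
  moreover have "InvTN s'" using assms(1) f unfolding Inv_def
    by (rule_tac InvTN_mono[where N="{(j, Cl c, Put (Suc (rnd s c)) (t, j, enc v j)) | j. j \<in> C}"])
       (auto simp: nrnd_def eidx_def)
  moreover have "InvTC s'" using assms(1) f unfolding Inv_def by (rule_tac InvTC_cong[of s]) auto
  moreover have "InvL s'" using assms(1) f unfolding Inv_def by (rule_tac InvL_cong[of s]) auto
  moreover have "InvS s'" using assms(1,2) f finC unfolding Inv_def InvS_def by (auto simp: etag_def eidx_def)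
  ultimately show ?thesis unfolding Inv_parts by blast
qed

lemma Inv_client_recv:
  assumes "Inv s0" "j \<in> C" "s' = client_recv C k enc dec c j m s0"
  shows "Inv s'"
proof -
  have ph: "InvPh s0 c" using assms(1) unfolding Inv_def by blast
  have S: "InvS s0" using assms(1) unfolding Inv_def by blast
  from client_recv_cases[OF assms(3) refl] show ?thesis
  proof (elim disjE exE conjE)
    assume "s' = s0" then show ?thesis using assms(1) by simp
  next
    fix r v M eo M' assume a: "phs s0 c = WTag r v M" "M' = M(j \<mapsto> tagval (signed s0) eo)"
      "s' = s0\<lparr>phs := (phs s0)(c := WTag r v M')\<rparr>"
    show ?thesis unfolding a(3) apply (rule Inv_phase_upd[OF assms(1)]) using ph a assms(2) by (simp add: InvPh_def)
  next
    fix r v M eo M' assume a: "phs s0 c = WTag r v M" "M' = M(j \<mapsto> tagval (signed s0) eo)"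
      "s' = start_put C enc c (Suc (fst (Max {t. \<exists>i. M' i = Some (Some t)})), c) v (\<lambda>r. WPut r {}) s0"
    show ?thesis by (rule Inv_start_put[OF assms(1) _ _ a(3)]) auto
  next
    fix r A assume a: "phs s0 c = WPut r A" "s' = s0\<lparr>phs := (phs s0)(c := Idle)\<rparr>"
    show ?thesis unfolding a(2) apply (rule Inv_phase_upd[OF assms(1)]) by (simp add: InvPh_def)
  next
    fix r A assume a: "phs s0 c = WPut r A" "s' = s0\<lparr>phs := (phs s0)(c := WPut r (insert j A))\<rparr>"
    show ?thesis unfolding a(2) apply (rule Inv_phase_upd[OF assms(1)]) using ph a assms(2) by (simp add: InvPh_def)
  next
    fix r M S M' assume a: "phs s0 c = RGet r M" "M' = M(j \<mapsto> rdfilter (signed s0) j S)"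
      "s' = s0\<lparr>phs := (phs s0)(c := RGet r M')\<rparr>"
    show ?thesis unfolding a(3) apply (rule Inv_phase_upd[OF assms(1)]) using ph a assms(2) by (auto simp: InvPh_def rdfilter_def)
  next
    fix r M S M' assume a: "phs s0 c = RGet r M" "M' = M(j \<mapsto> rdfilter (signed s0) j S)"
      "candidate_tags k M' \<noteq> {}"
      "s' = start_put C enc c (Max (candidate_tags k M')) (rdval dec M' (Max (candidate_tags k M')))
               (\<lambda>r. RPut r (rdval dec M' (Max (candidate_tags k M'))) {}) s0"
    have vals: "\<forall>i X. M' i = Some X \<longrightarrow> X \<subseteq> signed s0" using ph a(1,2) by (auto simp: InvPh_def rdfilter_def)
    have cs: "candidate_tags k M' \<subseteq> etag ` signed s0" by (rule cand_sub[OF vals k1])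
    have fin: "finite (candidate_tags k M')" using cs S unfolding InvS_def by (meson finite_imageI finite_subset)
    have "Max (candidate_tags k M') \<in> etag ` signed s0" using Max_in[OF fin a(3)] cs by blast
    then obtain e where "e \<in> signed s0" "Max (candidate_tags k M') = etag e" by blast
    then have "Max (candidate_tags k M') = (0, w0) \<or> 0 < fst (Max (candidate_tags k M'))"
      using S unfolding InvS_def by metis
    then show ?thesis by (rule Inv_start_put[OF assms(1) _ _ a(4)]) auto
  next
    fix r v A assume a: "phs s0 c = RPut r v A" "s' = s0\<lparr>phs := (phs s0)(c := Idle)\<rparr>"
    show ?thesis unfolding a(2) apply (rule Inv_phase_upd[OF assms(1)]) by (simp add: InvPh_def)
  next
    fix r v A assume a: "phs s0 c = RPut r v A" "s' = s0\<lparr>phs := (phs s0)(c := RPut r v (insert j A))\<rparr>"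
    show ?thesis unfolding a(2) apply (rule Inv_phase_upd[OF assms(1)]) using ph a assms(2) by (simp add: InvPh_def)
  qed
qed

lemma Inv_client: assumes "Inv s" "client_step C k enc dec s s'" shows "Inv s'"
proof -
  obtain c j m where m: "(c, j, m) \<in> toClient s" and s': "s' = client_recv C k enc dec c j m (s\<lparr>toClient := toClient s - {(c, j, m)}\<rparr>)"
    using assms(2) unfolding client_step_def by blast
  have "j \<in> C" using assms(1) m unfolding Inv_def InvTC_def by blast
  then show ?thesis using Inv_client_recv[OF Inv_rem_client[OF assms(1)] _ s'] by blast
qed

lemma Inv_step: assumes "Inv s" "next_step C Byz k \<delta> enc dec s s'" shows "Inv s'"
  using assms(2) unfolding next_step_def
  using Inv_inv_write[OF assms(1)] Inv_inv_read[OF assms(1)] Inv_node[OF assms(1)]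
    Inv_client[OF assms(1)] Inv_byz[OF assms(1)] assms(1) by blast

lemma Inv_run: "Inv (run i)"
  by (induction i) (use Inv_init Inv_step step in auto)

end



lemma sp_simps:
  "lists (start_put C enc c t v ph s) = lists s"
  "toClient (start_put C enc c t v ph s) = toClient s"
  "phs (start_put C enc c t v ph s) = (phs s)(c := ph (Suc (rnd s c)))"
  "rnd (start_put C enc c t v ph s) = (rnd s)(c := Suc (rnd s c))"
  "signed (start_put C enc c t v ph s) = signed s \<union> {(t, j, enc v j) | j. j \<in> C}"
  "toNode (start_put C enc c t v ph s) = toNode s \<union> {(j, Cl c, Put (Suc (rnd s c)) (t, j, enc v j)) | j. j \<in> C}"
  by (simp_all add: start_put_def Let_def)

context proto begin

lemma Inv_s: "Inv (run i)" by (rule Inv_run)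

lemma InvPh_run: "InvPh (run i) c" using Inv_run[of i] unfolding Inv_def by blast
lemma InvTN_run: "InvTN (run i)" using Inv_run[of i] unfolding Inv_def by blast
lemma InvTC_run: "InvTC (run i)" using Inv_run[of i] unfolding Inv_def by blast
lemma InvL_run: "InvL (run i)" using Inv_run[of i] unfolding Inv_def by blast
lemma InvS_run: "InvS (run i)" using Inv_run[of i] unfolding Inv_def by blast

definition NewOK :: "('n,'w,'v,'e) gstate \<Rightarrow> ('n,'w,'v,'e) gstate \<Rightarrow> bool" where
  "NewOK s s' \<longleftrightarrow> signed s \<subseteq> signed s' \<and>
    (\<forall>c. rnd s' c = rnd s c \<or> rnd s' c = Suc (rnd s c)) \<and>
    (\<exists>NT. \<forall>i src m. (i, src, m) \<in> toNode s' \<longrightarrow> (i, src, m) \<notin> toNode s \<longrightarrow>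
        (\<exists>j. src = Nd j) \<or> (\<exists>c. src = Cl c \<and> nrnd m = rnd s' c \<and> rnd s' c = Suc (rnd s c) \<and>
             (\<forall>r e. m = Put r e \<longrightarrow> etag e = NT c)))"

lemma NewOK_same: "signed s' = signed s \<Longrightarrow> rnd s' = rnd s \<Longrightarrow> toNode s' \<subseteq> toNode s \<union> {(i, Nd j, m) | i j m. True} \<Longrightarrow> NewOK s s'"
  unfolding NewOK_def by (intro conjI exI[of _ "\<lambda>_. undefined"]) auto

lemma NewOK_step: assumes "Inv s" "next_step C Byz k \<delta> enc dec s s'" shows "NewOK s s'"
  using assms(2) unfolding next_step_def
proof (elim disjE)
  assume "s' = s" then show ?thesis by (intro NewOK_same) auto
next
  assume "inv_write C s s'"
  then obtain c v where s': "s' = s\<lparr>rnd := (rnd s)(c := Suc (rnd s c)), phs := (phs s)(c := WTag (Suc (rnd s c)) v Map.empty),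
                toNode := toNode s \<union> {(j, Cl c, QTag (Suc (rnd s c))) | j. j \<in> C}\<rparr>"
    unfolding inv_write_def Let_def by blast
  show ?thesis unfolding NewOK_def s' by (auto simp: nrnd_def)
next
  assume "inv_read C s s'"
  then obtain c where s': "s' = s\<lparr>rnd := (rnd s)(c := Suc (rnd s c)), phs := (phs s)(c := RGet (Suc (rnd s c)) Map.empty),
                toNode := toNode s \<union> {(j, Cl c, QData (Suc (rnd s c))) | j. j \<in> C}\<rparr>"
    unfolding inv_read_def Let_def by blast
  show ?thesis unfolding NewOK_def s' by (auto simp: nrnd_def)
next
  assume "node_step C Byz \<delta> s s'"
  then obtain j src m where "s' = node_recv \<delta> j src m (s\<lparr>toNode := toNode s - {(j, src, m)}\<rparr>)"
    unfolding node_step_def by blast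
  note f = node_recv_fields[OF this]
  show ?thesis using f by (intro NewOK_same) auto
next
  assume "byz_step C Byz s s'"
  then show ?thesis unfolding byz_step_def
    by (elim bexE disjE exE conjE) (rule NewOK_same; auto)+
next
  assume "client_step C k enc dec s s'"
  then obtain c j m where s': "s' = client_recv C k enc dec c j m (s\<lparr>toClient := toClient s - {(c, j, m)}\<rparr>)"
    unfolding client_step_def by blast
  define s0 where "s0 = s\<lparr>toClient := toClient s - {(c, j, m)}\<rparr>"
  have f0: "signed s0 = signed s" "rnd s0 = rnd s" "toNode s0 = toNode s" unfolding s0_def by simp_all
  have sp: "NewOK s (start_put C enc c t v ph s0)" for t v ph
  proof -
    note g = start_put_fields[OF refl, of C enc c t v ph s0]
    show ?thesis unfolding NewOK_def
    proof (intro conjI)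
      show "signed s \<subseteq> signed (start_put C enc c t v ph s0)" using g f0 by auto
      show "\<forall>ca. rnd (start_put C enc c t v ph s0) ca = rnd s ca \<or> rnd (start_put C enc c t v ph s0) ca = Suc (rnd s ca)"
        using g f0 by auto
      show "\<exists>NT. \<forall>i src m. (i, src, m) \<in> toNode (start_put C enc c t v ph s0) \<longrightarrow> (i, src, m) \<notin> toNode s \<longrightarrow>
        (\<exists>j. src = Nd j) \<or> (\<exists>ca. src = Cl ca \<and> nrnd m = rnd (start_put C enc c t v ph s0) ca \<and>
           rnd (start_put C enc c t v ph s0) ca = Suc (rnd s ca) \<and> (\<forall>r e. m = Put r e \<longrightarrow> etag e = NT ca))"
        using g f0 by (intro exI[of _ "\<lambda>_. t"]) (auto simp: nrnd_def etag_def)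
    qed
  qed
  have ph: "NewOK s (s0\<lparr>phs := X\<rparr>)" for X unfolding s0_def by (intro NewOK_same) auto
  from client_recv_cases[OF s'[folded s0_def] refl] show ?thesis
    by (elim disjE exE conjE; simp only: sp ph)
       (intro NewOK_same, simp_all add: s0_def)
qed

lemma NewOK_run: "NewOK (run i) (run (Suc i))"
  using NewOK_step[OF Inv_run step] .

lemma signed_mono: "i \<le> i' \<Longrightarrow> signed (run i) \<subseteq> signed (run i')"
proof (induction i' rule: dec_induct)
  case (step n) then show ?case using NewOK_run[of n] unfolding NewOK_def by blast
qed simp

lemma rnd_step: "rnd (run (Suc i)) c = rnd (run i) c \<or> rnd (run (Suc i)) c = Suc (rnd (run i) c)"
  using NewOK_run[of i] unfolding NewOK_def by blast

lemma rnd_mono: "i \<le> i' \<Longrightarrow> rnd (run i) c \<le> rnd (run i') c"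
proof (induction i' rule: dec_induct)
  case (step n) then show ?case using rnd_step[of n c] by linarith
qed simp

lemma msg_round: "(j, Cl c, m) \<in> toNode (run i) \<Longrightarrow> nrnd m \<le> rnd (run i) c"
  using InvTN_run[of i] unfolding InvTN_def by blast

lemma new_msg:
  assumes "(j, Cl c, m) \<in> toNode (run (Suc i))" "(j, Cl c, m) \<notin> toNode (run i)"
  shows "nrnd m = Suc (rnd (run i) c) \<and> rnd (run (Suc i)) c = Suc (rnd (run i) c)"
  using assms NewOK_run[of i] unfolding NewOK_def by fastforce

lemma new_put_same:
  assumes "(j, Cl c, Put r e) \<in> toNode (run (Suc i))" "(j, Cl c, Put r e) \<notin> toNode (run i)"
    "(j', Cl c, Put r' e') \<in> toNode (run (Suc i))" "(j', Cl c, Put r' e') \<notin> toNode (run i)"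
  shows "etag e = etag e'"
proof -
  obtain NT where NT: "\<forall>i' src m. (i', src, m) \<in> toNode (run (Suc i)) \<longrightarrow> (i', src, m) \<notin> toNode (run i) \<longrightarrow>
        (\<exists>j. src = Nd j) \<or> (\<exists>c. src = Cl c \<and> nrnd m = rnd (run (Suc i)) c \<and> rnd (run (Suc i)) c = Suc (rnd (run i) c) \<and>
             (\<forall>r e. m = Put r e \<longrightarrow> etag e = NT c))"
    using NewOK_run[of i] unfolding NewOK_def by blast
  have "etag e = NT c" using NT assms(1,2) by fastforce
  moreover have "etag e' = NT c" using NT assms(3,4) by fastforce
  ultimately show ?thesis by simp
qed

lemma PU: "i1 \<le> i \<Longrightarrow> (j, Cl c, Put r e) \<in> toNode (run i1) \<Longrightarrow> (j', Cl c, Put r e') \<in> toNode (run i) \<Longrightarrow> etag e = etag e'"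
proof (induction i arbitrary: i1 j e j' e')
  case 0 then show ?case by (simp add: run0 init_state_def)
next
  case (Suc i)
  note m1r = msg_round[OF Suc.prems(2)]
  show ?case
  proof (cases "i1 \<le> i")
    case True
    show ?thesis
    proof (cases "(j', Cl c, Put r e') \<in> toNode (run i)")
      case True then show ?thesis using Suc.IH[OF \<open>i1 \<le> i\<close> Suc.prems(2)] by blast
    next
      case False
      have "r = Suc (rnd (run i) c)" using new_msg[OF Suc.prems(3) False] by (simp add: nrnd_def)
      moreover have "rnd (run i1) c \<le> rnd (run i) c" using rnd_mono True by blast
      ultimately show ?thesis using m1r by (simp add: nrnd_def)
    qed
  next
    case False
    then have i1: "i1 = Suc i" using Suc.prems(1) by simp
    show ?thesis
    proof (cases "(j, Cl c, Put r e) \<in> toNode (run i)"; cases "(j', Cl c, Put r e') \<in> toNode (run i)")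
      assume a: "(j, Cl c, Put r e) \<in> toNode (run i)" "(j', Cl c, Put r e') \<in> toNode (run i)"
      show ?thesis using Suc.IH[OF order.refl a(1) a(2)] .
    next
      assume a: "(j, Cl c, Put r e) \<in> toNode (run i)" "(j', Cl c, Put r e') \<notin> toNode (run i)"
      show ?thesis using new_msg[OF Suc.prems(3) a(2)] msg_round[OF a(1)] by (simp add: nrnd_def)
    next
      assume a: "(j, Cl c, Put r e) \<notin> toNode (run i)" "(j', Cl c, Put r e') \<in> toNode (run i)"
      show ?thesis using new_msg[OF Suc.prems(2)[unfolded i1] a(1)] msg_round[OF a(2)] by (simp add: nrnd_def)
    next
      assume a: "(j, Cl c, Put r e) \<notin> toNode (run i)" "(j', Cl c, Put r e') \<notin> toNode (run i)"
      show ?thesis using new_put_same[OF Suc.prems(2)[unfolded i1] a(1) Suc.prems(3) a(2)] .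
    qed
  qed
qed

definition rtag :: "'w \<Rightarrow> nat \<Rightarrow> 'w tag" where
  "rtag c r = (SOME T. \<exists>i j e. (j, Cl c, Put r e) \<in> toNode (run i) \<and> etag e = T)"

lemma rtag_eq:
  assumes "(j, Cl c, Put r e) \<in> toNode (run i)"
  shows "etag e = rtag c r"
proof -
  have ex: "\<exists>T. \<exists>i j e. (j, Cl c, Put r e) \<in> toNode (run i) \<and> etag e = T" using assms by blast
  obtain i' j' e' where m': "(j', Cl c, Put r e') \<in> toNode (run i')" "etag e' = rtag c r"
    using someI_ex[OF ex] unfolding rtag_def by blast
  show ?thesis
  proof (cases "i \<le> i'")
    case True then show ?thesis using PU[OF True assms m'(1)] m'(2) by simp
  next
    case False then show ?thesis using PU[of i' i j' c r e' j e] m' assms by simp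
  qed
qed

lemma client_recv_fields:
  assumes "s' = client_recv C k enc dec c j m s0"
  shows "lists s' = lists s0 \<and> toClient s' = toClient s0 \<and> (\<forall>c'. c' \<noteq> c \<longrightarrow> phs s' c' = phs s0 c')"
proof -
  from client_recv_cases[OF assms refl] show ?thesis
    by (elim disjE exE conjE; simp add: sp_simps)
qed

lemma lists_step:
  "lists (run (Suc i)) j = lists (run i) j \<or>
   (\<exists>e. lists (run (Suc i)) j = store \<delta> j (signed (run i)) e (lists (run i) j))"
  using step[of i] unfolding next_step_def
proof (elim disjE)
  assume "node_step C Byz \<delta> (run i) (run (Suc i))"
  then obtain j' src m where "run (Suc i) = node_recv \<delta> j' src m ((run i)\<lparr>toNode := toNode (run i) - {(j', src, m)}\<rparr>)"
    unfolding node_step_def by blast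
  note f = node_recv_fields[OF this]
  show ?thesis
  proof (cases m)
    case (Put r e)
    then have l: "lists (run (Suc i)) = (lists (run i))(j' := store \<delta> j' (signed (run i)) e (lists (run i) j'))" using f by simp
    show ?thesis
    proof (cases "j = j'")
      case True then show ?thesis using l by (intro disjI2 exI[of _ e]) simp
    next
      case False then show ?thesis using l by simp
    qed
  qed (use f in simp_all)
next
  assume "client_step C k enc dec (run i) (run (Suc i))"
  then obtain c j' m where "run (Suc i) = client_recv C k enc dec c j' m ((run i)\<lparr>toClient := toClient (run i) - {(c, j', m)}\<rparr>)"
    unfolding client_step_def by blast
  then have "lists (run (Suc i)) = lists ((run i)\<lparr>toClient := toClient (run i) - {(c, j', m)}\<rparr>)"
    using client_recv_fields by blast
  then show ?thesis by simp
next
  assume "inv_write C (run i) (run (Suc i))"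
  then have "lists (run (Suc i)) = lists (run i)" unfolding inv_write_def Let_def by auto
  then show ?thesis by simp
next
  assume "inv_read C (run i) (run (Suc i))"
  then have "lists (run (Suc i)) = lists (run i)" unfolding inv_read_def Let_def by auto
  then show ?thesis by simp
next
  assume "byz_step C Byz (run i) (run (Suc i))"
  then have "lists (run (Suc i)) = lists (run i)" unfolding byz_step_def by auto
  then show ?thesis by simp
qed simp

lemma Pt_stable:
  assumes "j \<in> C - Byz" "Pt \<delta> (etag ` lists (run i) j) T" "i \<le> i'"
  shows "Pt \<delta> (etag ` lists (run i') j) T"
  using assms(3,2)
proof (induction i' rule: dec_induct)
  case (step n)
  have L: "finite (lists (run n) j)" "inj_on etag (lists (run n) j)" using InvL_run[of n] assms(1) unfolding InvL_def by blast+
  from lists_step[of n j] show ?case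
  proof
    assume "lists (run (Suc n)) j = lists (run n) j" then show ?thesis using step by simp
  next
    assume "\<exists>e. lists (run (Suc n)) j = store \<delta> j (signed (run n)) e (lists (run n) j)"
    then show ?thesis using Pt_store[OF L step.IH[OF step.prems]] by metis
  qed
qed simp

definition Rep :: "nat \<Rightarrow> 'w \<Rightarrow> 'n \<Rightarrow> ('n,'w,'e) cmsg \<Rightarrow> bool" where
  "Rep i c j m = (case m of
      RTag r eo \<Rightarrow> (\<exists>i'\<le>i. r \<le> rnd (run i') c \<and> eo = Some (max_entry (lists (run i') j)))
    | RData r L \<Rightarrow> (\<exists>i'\<le>i. r \<le> rnd (run i') c \<and> L = lists (run i') j)
    | Ack r \<Rightarrow> Pt \<delta> (etag ` lists (run i) j) (rtag c r))"

definition HPh :: "nat \<Rightarrow> 'w \<Rightarrow> bool" where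
  "HPh i c = (case phs (run i) c of Idle \<Rightarrow> True
    | WTag r v M \<Rightarrow> (\<forall>j \<in> dom M - Byz. \<exists>i'\<le>i. r \<le> rnd (run i') c \<and> M j = Some (Some (etag (max_entry (lists (run i') j)))))
    | RGet r M \<Rightarrow> (\<forall>j \<in> dom M - Byz. \<exists>i'\<le>i. r \<le> rnd (run i') c \<and> M j = Some (lists (run i') j))
    | WPut r A \<Rightarrow> (\<forall>j \<in> A - Byz. Pt \<delta> (etag ` lists (run i) j) (rtag c r))
    | RPut r v A \<Rightarrow> (\<forall>j \<in> A - Byz. Pt \<delta> (etag ` lists (run i) j) (rtag c r)))"

definition HInv :: "nat \<Rightarrow> bool" where
  "HInv i \<longleftrightarrow> (\<forall>c j m. (c, j, m) \<in> toClient (run i) \<longrightarrow> j \<notin> Byz \<longrightarrow> Rep i c j m) \<and> (\<forall>c. HPh i c)"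

lemma Rep_keep:
  assumes "j \<in> C - Byz" "Rep i c j m" shows "Rep (Suc i) c j m"
  using assms Pt_stable[OF assms(1), of i _ "Suc i"] unfolding Rep_def
  by (cases m) (auto intro: le_SucI)

lemma HPh_keep:
  assumes "phs (run (Suc i)) c = phs (run i) c" "HPh i c" shows "HPh (Suc i) c"
proof -
  have ph: "InvPh (run i) c" by (rule InvPh_run)
  show ?thesis
  proof (cases "phs (run i) c")
    case (WPut r A)
    then have "A \<subseteq> C" using ph unfolding InvPh_def by simp
    have "Pt \<delta> (etag ` lists (run (Suc i)) j) (rtag c r)" if "j \<in> A - Byz" for j
    proof -
      have P: "Pt \<delta> (etag ` lists (run i) j) (rtag c r)" using assms(2) WPut that unfolding HPh_def by simp
      show ?thesis by (rule Pt_stable[OF _ P]) (use that \<open>A \<subseteq> C\<close> in auto)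
    qed
    then show ?thesis using assms(1) WPut unfolding HPh_def by simp
  next
    case (RPut r v A)
    then have "A \<subseteq> C" using ph unfolding InvPh_def by simp
    have "Pt \<delta> (etag ` lists (run (Suc i)) j) (rtag c r)" if "j \<in> A - Byz" for j
    proof -
      have P: "Pt \<delta> (etag ` lists (run i) j) (rtag c r)" using assms(2) RPut that unfolding HPh_def by simp
      show ?thesis by (rule Pt_stable[OF _ P]) (use that \<open>A \<subseteq> C\<close> in auto)
    qed
    then show ?thesis using assms(1) RPut unfolding HPh_def by simp
  next
    case (WTag r v M) then show ?thesis using assms unfolding HPh_def by (auto intro: le_SucI)
  next
    case (RGet r M) then show ?thesis using assms unfolding HPh_def by (auto intro: le_SucI)
  qed (use assms in \<open>simp add: HPh_def\<close>)
qed

lemma HInv_keep_client: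
  assumes "HInv i" "toClient (run (Suc i)) \<subseteq> toClient (run i)"
  shows "\<forall>c j m. (c, j, m) \<in> toClient (run (Suc i)) \<longrightarrow> j \<notin> Byz \<longrightarrow> Rep (Suc i) c j m"
proof (intro allI impI)
  fix c j m assume a: "(c, j, m) \<in> toClient (run (Suc i))" "j \<notin> Byz"
  then have "(c, j, m) \<in> toClient (run i)" using assms(2) by blast
  moreover then have "j \<in> C" using InvTC_run[of i] unfolding InvTC_def by blast
  ultimately show "Rep (Suc i) c j m" using assms(1) a(2) Rep_keep unfolding HInv_def by blast
qed

lemma HInv_0: "HInv 0"
  unfolding HInv_def HPh_def by (simp add: run0 init_state_def)

lemma HInv_node:
  assumes H: "HInv i" and j0: "j0 \<in> C - Byz" and inm: "(j0, src, m0) \<in> toNode (run i)"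
    and eq: "run (Suc i) = node_recv \<delta> j0 src m0 ((run i)\<lparr>toNode := toNode (run i) - {(j0, src, m0)}\<rparr>)"
  shows "HInv (Suc i)"
proof -
  note f = node_recv_fields[OF eq]
  have ph: "HPh (Suc i) c" for c using H f HPh_keep unfolding HInv_def by simp
  have "Rep (Suc i) c j m" if cm: "(c, j, m) \<in> toClient (run (Suc i))" "j \<notin> Byz" for c j m
  proof (cases "(c, j, m) \<in> toClient (run i)")
    case True
    then have "j \<in> C" using InvTC_run[of i] unfolding InvTC_def by blast
    then show ?thesis using H True cm(2) Rep_keep unfolding HInv_def by blast
  next
    case False
    then obtain c0 where src: "src = Cl c0" and new: "(c, j, m) = (c0, j0, node_reply m0 (lists (run i) j0))"
      using cm f by (cases src) auto
    then have cc: "c = c0" "j = j0" "m = node_reply m0 (lists (run i) j0)" by auto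
    show ?thesis
    proof (cases m0)
      case (QTag r)
      have "r \<le> rnd (run i) c" using msg_round[OF inm[unfolded src QTag]] cc by (simp add: nrnd_def)
      then show ?thesis unfolding cc QTag Rep_def node_reply_def by (auto intro!: exI[of _ i])
    next
      case (QData r)
      have "r \<le> rnd (run i) c" using msg_round[OF inm[unfolded src QData]] cc by (simp add: nrnd_def)
      then show ?thesis unfolding cc QData Rep_def node_reply_def by (auto intro!: exI[of _ i])
    next
      case (Put r e)
      have v: "e \<in> signed (run i)" "eidx e = j0" using InvTN_run[of i] inm unfolding InvTN_def src Put by blast+
      have L: "finite (lists (run i) j0)" "inj_on etag (lists (run i) j0)" using InvL_run[of i] j0 unfolding InvL_def by blast+
      have l: "lists (run (Suc i)) j0 = store \<delta> j0 (signed (run i)) e (lists (run i) j0)" using f Put by simp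
      have "etag e = rtag c0 r" using rtag_eq inm unfolding src Put by blast
      then have "Pt \<delta> (etag ` lists (run (Suc i)) j0) (rtag c0 r)" using Pt_store_new[OF L v] l by simp
      then show ?thesis unfolding cc Put by (simp add: Rep_def node_reply_def)
    qed
  qed
  then show ?thesis using ph unfolding HInv_def by blast
qed

lemma rdfilter_id:
  assumes "j \<in> C - Byz" "i' \<le> i"
  shows "rdfilter (signed (run i)) j (lists (run i') j) = lists (run i') j"
proof -
  have "lists (run i') j \<subseteq> signed (run i')" "\<forall>e \<in> lists (run i') j. eidx e = j"
    using InvL_run[of i'] assms(1) unfolding InvL_def by blast+
  then show ?thesis using signed_mono[OF assms(2)] unfolding rdfilter_def by blast
qed

lemma tagval_max:
  assumes "j \<in> C - Byz" "i' \<le> i"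
  shows "tagval (signed (run i)) (Some (max_entry (lists (run i') j))) = Some (etag (max_entry (lists (run i') j)))"
proof -
  have "finite (lists (run i') j)" "lists (run i') j \<noteq> {}" "lists (run i') j \<subseteq> signed (run i')"
    using InvL_run[of i'] assms(1) unfolding InvL_def by blast+
  then have "max_entry (lists (run i') j) \<in> signed (run i)"
    using max_entry signed_mono[OF assms(2)] by blast
  then show ?thesis unfolding tagval_def by simp
qed

lemma HInv_client:
  assumes H: "HInv i" and inm: "(c, j0, m0) \<in> toClient (run i)"
    and eq: "run (Suc i) = client_recv C k enc dec c j0 m0 ((run i)\<lparr>toClient := toClient (run i) - {(c, j0, m0)}\<rparr>)"
  shows "HInv (Suc i)"
proof -
  define s0 where "s0 = (run i)\<lparr>toClient := toClient (run i) - {(c, j0, m0)}\<rparr>"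
  have f0: "phs s0 = phs (run i)" "signed s0 = signed (run i)" "lists s0 = lists (run i)" "rnd s0 = rnd (run i)"
    unfolding s0_def by simp_all
  note f = client_recv_fields[OF eq[folded s0_def]]
  have j0C: "j0 \<in> C" using InvTC_run[of i] inm unfolding InvTC_def by blast
  have rep: "Rep i c j0 m0" if "j0 \<notin> Byz" using H inm that unfolding HInv_def by blast
  have HP: "HPh i c" using H unfolding HInv_def by blast
  have l: "lists (run (Suc i)) = lists (run i)" using f f0 by simp
  have R: "\<forall>c j m. (c, j, m) \<in> toClient (run (Suc i)) \<longrightarrow> j \<notin> Byz \<longrightarrow> Rep (Suc i) c j m"
    using HInv_keep_client[OF H] f unfolding s0_def by auto
  have O: "HPh (Suc i) c'" if "c' \<noteq> c" for c'
    using HPh_keep[of i c'] f f0 that H unfolding HInv_def by simp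
  have "HPh (Suc i) c"
    using client_recv_cases[OF eq[folded s0_def] refl]
  proof (elim disjE exE conjE)
    assume "run (Suc i) = s0" then show ?thesis using HPh_keep[of i c] HP f0 by simp
  next
    fix r v M eo M' assume a: "phs s0 c = WTag r v M" "m0 = RTag r eo" "M' = M(j0 \<mapsto> tagval (signed s0) eo)"
      "run (Suc i) = s0\<lparr>phs := (phs s0)(c := WTag r v M')\<rparr>"
    have "\<exists>i'\<le>Suc i. r \<le> rnd (run i') c \<and> M' j = Some (Some (etag (max_entry (lists (run i') j))))"
      if j: "j \<in> dom M' - Byz" for j
    proof (cases "j = j0")
      case True
      then obtain i' where i': "i' \<le> i" "r \<le> rnd (run i') c" "eo = Some (max_entry (lists (run i') j0))"
        using rep j a(2) unfolding Rep_def by auto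
      then have "M' j = Some (Some (etag (max_entry (lists (run i') j0))))"
        using a(3) True tagval_max[of j0 i' i] j0C j f0 by simp
      then show ?thesis using i' True by (intro exI[of _ i']) auto
    next
      case False
      then have "j \<in> dom M - Byz" using j a(3) by auto
      then obtain i' where "i' \<le> i" "r \<le> rnd (run i') c" "M j = Some (Some (etag (max_entry (lists (run i') j))))"
        using HP a(1) f0 unfolding HPh_def by auto
      then show ?thesis using False a(3) by (intro exI[of _ i']) auto
    qed
    then show ?thesis using a(4) unfolding HPh_def by simp
  next
    fix r v M eo M'
    assume a: "run (Suc i) = start_put C enc c (Suc (fst (Max {t. \<exists>i. M' i = Some (Some t)})), c) v (\<lambda>r. WPut r {}) s0"
    show ?thesis unfolding HPh_def a sp_simps by simp
  next
    fix r A assume a: "run (Suc i) = s0\<lparr>phs := (phs s0)(c := Idle)\<rparr>"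
    show ?thesis unfolding HPh_def a by simp
  next
    fix r A assume a: "phs s0 c = WPut r A" "m0 = Ack r" "run (Suc i) = s0\<lparr>phs := (phs s0)(c := WPut r (insert j0 A))\<rparr>"
    have "Pt \<delta> (etag ` lists (run (Suc i)) j) (rtag c r)" if j: "j \<in> insert j0 A - Byz" for j
    proof (cases "j = j0")
      case True then show ?thesis using rep j a(2) l unfolding Rep_def by auto
    next
      case False then show ?thesis using HP a(1) f0 j l unfolding HPh_def by auto
    qed
    then show ?thesis using a(3) unfolding HPh_def by simp
  next
    fix r M S M' assume a: "phs s0 c = RGet r M" "m0 = RData r S" "M' = M(j0 \<mapsto> rdfilter (signed s0) j0 S)"
      "run (Suc i) = s0\<lparr>phs := (phs s0)(c := RGet r M')\<rparr>"
    have "\<exists>i'\<le>Suc i. r \<le> rnd (run i') c \<and> M' j = Some (lists (run i') j)"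
      if j: "j \<in> dom M' - Byz" for j
    proof (cases "j = j0")
      case True
      then obtain i' where i': "i' \<le> i" "r \<le> rnd (run i') c" "S = lists (run i') j0"
        using rep j a(2) unfolding Rep_def by auto
      then have "M' j = Some (lists (run i') j0)"
        using a(3) True rdfilter_id[of j0 i' i] j0C j f0 by simp
      then show ?thesis using i' True by (intro exI[of _ i']) auto
    next
      case False
      then have "j \<in> dom M - Byz" using j a(3) by auto
      then obtain i' where "i' \<le> i" "r \<le> rnd (run i') c" "M j = Some (lists (run i') j)"
        using HP a(1) f0 unfolding HPh_def by auto
      then show ?thesis using False a(3) by (intro exI[of _ i']) auto
    qed
    then show ?thesis using a(4) unfolding HPh_def by simp
  next
    fix r M S M'
    assume a: "run (Suc i) = start_put C enc c (Max (candidate_tags k M')) (rdval dec M' (Max (candidate_tags k M')))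
               (\<lambda>r. RPut r (rdval dec M' (Max (candidate_tags k M'))) {}) s0"
    show ?thesis unfolding HPh_def a sp_simps by simp
  next
    fix r v A assume a: "run (Suc i) = s0\<lparr>phs := (phs s0)(c := Idle)\<rparr>"
    show ?thesis unfolding HPh_def a by simp
  next
    fix r v A assume a: "phs s0 c = RPut r v A" "m0 = Ack r" "run (Suc i) = s0\<lparr>phs := (phs s0)(c := RPut r v (insert j0 A))\<rparr>"
    have "Pt \<delta> (etag ` lists (run (Suc i)) j) (rtag c r)" if j: "j \<in> insert j0 A - Byz" for j
    proof (cases "j = j0")
      case True then show ?thesis using rep j a(2) l unfolding Rep_def by auto
    next
      case False then show ?thesis using HP a(1) f0 j l unfolding HPh_def by auto
    qed
    then show ?thesis using a(3) unfolding HPh_def by simp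
  qed
  then show ?thesis using R O unfolding HInv_def by metis
qed

lemma HInv_step: assumes H: "HInv i" shows "HInv (Suc i)"
  using step[of i] unfolding next_step_def
proof (elim disjE)
  assume a: "run (Suc i) = run i"
  have "\<forall>c j m. (c, j, m) \<in> toClient (run (Suc i)) \<longrightarrow> j \<notin> Byz \<longrightarrow> Rep (Suc i) c j m"
    using HInv_keep_client[OF H] a by simp
  moreover have "HPh (Suc i) c" for c using HPh_keep[of i c] a H unfolding HInv_def by simp
  ultimately show ?thesis unfolding HInv_def by blast
next
  assume "inv_write C (run i) (run (Suc i))"
  then obtain c v where c: "phs (run i) c = Idle" and s': "run (Suc i) = (run i)\<lparr>rnd := (rnd (run i))(c := Suc (rnd (run i) c)), phs := (phs (run i))(c := WTag (Suc (rnd (run i) c)) v Map.empty),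
                toNode := toNode (run i) \<union> {(j, Cl c, QTag (Suc (rnd (run i) c))) | j. j \<in> C}\<rparr>"
    unfolding inv_write_def Let_def by blast
  have "\<forall>c j m. (c, j, m) \<in> toClient (run (Suc i)) \<longrightarrow> j \<notin> Byz \<longrightarrow> Rep (Suc i) c j m"
    using HInv_keep_client[OF H] s' by simp
  moreover have "HPh (Suc i) c'" for c'
  proof (cases "c' = c")
    case True then show ?thesis unfolding HPh_def s' by simp
  next
    case False then show ?thesis using HPh_keep[of i c'] H s' unfolding HInv_def by simp
  qed
  ultimately show ?thesis unfolding HInv_def by blast
next
  assume "inv_read C (run i) (run (Suc i))"
  then obtain c where c: "phs (run i) c = Idle" and s': "run (Suc i) = (run i)\<lparr>rnd := (rnd (run i))(c := Suc (rnd (run i) c)), phs := (phs (run i))(c := RGet (Suc (rnd (run i) c)) Map.empty),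
                toNode := toNode (run i) \<union> {(j, Cl c, QData (Suc (rnd (run i) c))) | j. j \<in> C}\<rparr>"
    unfolding inv_read_def Let_def by blast
  have "\<forall>c j m. (c, j, m) \<in> toClient (run (Suc i)) \<longrightarrow> j \<notin> Byz \<longrightarrow> Rep (Suc i) c j m"
    using HInv_keep_client[OF H] s' by simp
  moreover have "HPh (Suc i) c'" for c'
  proof (cases "c' = c")
    case True then show ?thesis unfolding HPh_def s' by simp
  next
    case False then show ?thesis using HPh_keep[of i c'] H s' unfolding HInv_def by simp
  qed
  ultimately show ?thesis unfolding HInv_def by blast
next
  assume "node_step C Byz \<delta> (run i) (run (Suc i))"
  then show ?thesis unfolding node_step_def using HInv_node[OF H] by blast
next
  assume "client_step C k enc dec (run i) (run (Suc i))"
  then show ?thesis unfolding client_step_def using HInv_client[OF H] by blast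
next
  assume "byz_step C Byz (run i) (run (Suc i))"
  then obtain j where j: "j \<in> Byz" and
    cases: "(\<exists>c m. run (Suc i) = (run i)\<lparr>toClient := insert (c, j, m) (toClient (run i))\<rparr>)
      \<or> (\<exists>i' m. run (Suc i) = (run i)\<lparr>toNode := insert (i', Nd j, m) (toNode (run i))\<rparr>)"
    unfolding byz_step_def by blast
  have ph: "phs (run (Suc i)) = phs (run i)" using cases by auto
  have "HPh (Suc i) c" for c using HPh_keep[of i c] ph H unfolding HInv_def by simp
  moreover have "Rep (Suc i) c j' m" if a: "(c, j', m) \<in> toClient (run (Suc i))" "j' \<notin> Byz" for c j' m
  proof -
    have "(c, j', m) \<in> toClient (run i)" using a j cases by auto
    moreover then have "j' \<in> C" using InvTC_run[of i] unfolding InvTC_def by blast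
    ultimately show ?thesis using H a(2) Rep_keep unfolding HInv_def by blast
  qed
  ultimately show ?thesis unfolding HInv_def by blast
qed

lemma HInv_run: "HInv i"
  by (induction i) (use HInv_0 HInv_step in auto)

end



context proto begin

definition WSTEP :: "nat \<Rightarrow> 'w \<Rightarrow> nat \<Rightarrow> 'v \<Rightarrow> bool" where
  "WSTEP i c r v \<longleftrightarrow> (\<exists>M'. card (dom M') = q \<and> dom M' \<subseteq> C \<and>
     (\<forall>j \<in> dom M' - Byz. \<exists>i'\<le>i. r \<le> rnd (run i') c \<and> M' j = Some (Some (etag (max_entry (lists (run i') j))))) \<and>
     rtag c (Suc r) = (Suc (fst (Max {t. \<exists>j. M' j = Some (Some t)})), c) \<and>
     signed (run (Suc i)) = signed (run i) \<union> {(rtag c (Suc r), j, enc v j) | j. j \<in> C})"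

definition RSTEP :: "nat \<Rightarrow> 'w \<Rightarrow> nat \<Rightarrow> 'v \<Rightarrow> bool" where
  "RSTEP i c r v \<longleftrightarrow> (\<exists>M'. card (dom M') = q \<and> dom M' \<subseteq> C \<and>
     (\<forall>j \<in> dom M' - Byz. \<exists>i'\<le>i. r \<le> rnd (run i') c \<and> M' j = Some (lists (run i') j)) \<and>
     (\<forall>j X. M' j = Some X \<longrightarrow> X \<subseteq> signed (run i) \<and> (\<forall>e\<in>X. eidx e = j)) \<and>
     candidate_tags k M' \<noteq> {} \<and> rtag c (Suc r) = Max (candidate_tags k M') \<and>
     v = rdval dec M' (Max (candidate_tags k M')) \<and>
     signed (run (Suc i)) = signed (run i) \<union> {(rtag c (Suc r), j, enc v j) | j. j \<in> C})"

definition PSTEP :: "nat \<Rightarrow> 'w \<Rightarrow> nat \<Rightarrow> bool" where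
  "PSTEP i c r \<longleftrightarrow> (\<exists>Q. Q \<subseteq> C \<and> card Q = q \<and> (\<forall>j \<in> Q - Byz. Pt \<delta> (etag ` lists (run i) j) (rtag c r)))"

lemma C_ne: "C \<noteq> {}" using k1 kn by auto

lemma sp_rtag:
  assumes "run (Suc i) = start_put C enc c t v ph s0" "rnd s0 c = rnd (run i) c"
  shows "rtag c (Suc (rnd (run i) c)) = t"
proof -
  obtain j where j: "j \<in> C" using C_ne by blast
  have "(j, Cl c, Put (Suc (rnd (run i) c)) (t, j, enc v j)) \<in> toNode (run (Suc i))"
    using assms j by (simp add: sp_simps)
  from rtag_eq[OF this] show ?thesis by (simp add: etag_def)
qed

definition PS :: "nat \<Rightarrow> 'w \<Rightarrow> bool" where
 "PS i c \<longleftrightarrow> (let p = phs (run i) c; p' = phs (run (Suc i)) c; r0 = rnd (run i) c; r1 = rnd (run (Suc i)) c in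
   (p' = p \<and> r1 = r0)
 \<or> (p = Idle \<and> r1 = Suc r0 \<and> ((\<exists>v. p' = WTag r1 v Map.empty) \<or> p' = RGet r1 Map.empty))
 \<or> (\<exists>r v M M'. p = WTag r v M \<and> p' = WTag r v M' \<and> r1 = r0)
 \<or> (\<exists>r v M. p = WTag r v M \<and> p' = WPut (Suc r) {} \<and> r1 = Suc r0 \<and> WSTEP i c r v)
 \<or> (\<exists>r A A'. p = WPut r A \<and> p' = WPut r A' \<and> r1 = r0)
 \<or> (\<exists>r A. p = WPut r A \<and> p' = Idle \<and> r1 = r0 \<and> PSTEP i c r)
 \<or> (\<exists>r M M'. p = RGet r M \<and> p' = RGet r M' \<and> r1 = r0)
 \<or> (\<exists>r M v. p = RGet r M \<and> p' = RPut (Suc r) v {} \<and> r1 = Suc r0 \<and> RSTEP i c r v)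
 \<or> (\<exists>r v A A'. p = RPut r v A \<and> p' = RPut r v A' \<and> r1 = r0)
 \<or> (\<exists>r v A. p = RPut r v A \<and> p' = Idle \<and> r1 = r0 \<and> PSTEP i c r))"

lemma client_recv_other:
  assumes "s' = client_recv C k enc dec c j m s0" "c' \<noteq> c"
  shows "phs s' c' = phs s0 c' \<and> rnd s' c' = rnd s0 c'"
  using client_recv_cases[OF assms(1) refl] assms(2)
  by (elim disjE exE conjE; simp add: sp_simps)

lemma PS_same: "phs (run (Suc i)) c = phs (run i) c \<Longrightarrow> rnd (run (Suc i)) c = rnd (run i) c \<Longrightarrow> PS i c"
  unfolding PS_def Let_def by simp

lemma PS_client_same:
  assumes inm: "(c, j0, m0) \<in> toClient (run i)"
    and eq: "run (Suc i) = client_recv C k enc dec c j0 m0 ((run i)\<lparr>toClient := toClient (run i) - {(c, j0, m0)}\<rparr>)"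
  shows "PS i c"
proof -
  define s0 where "s0 = (run i)\<lparr>toClient := toClient (run i) - {(c, j0, m0)}\<rparr>"
  have f0: "phs s0 = phs (run i)" "signed s0 = signed (run i)" "lists s0 = lists (run i)" "rnd s0 = rnd (run i)"
    unfolding s0_def by simp_all
  have j0C: "j0 \<in> C" using InvTC_run[of i] inm unfolding InvTC_def by blast
  have rep: "Rep i c j0 m0" if "j0 \<notin> Byz" using HInv_run[of i] inm that unfolding HInv_def by blast
  have HP: "HPh i c" using HInv_run[of i] unfolding HInv_def by blast
  have IP: "InvPh (run i) c" by (rule InvPh_run)
  show ?thesis
    using client_recv_cases[OF eq[folded s0_def] refl]
  proof (elim disjE exE conjE)
    assume "run (Suc i) = s0" then show ?thesis using f0 by (intro PS_same) auto
  next
    fix r v M eo M' assume a: "phs s0 c = WTag r v M" "M' = M(j0 \<mapsto> tagval (signed s0) eo)"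
      "run (Suc i) = s0\<lparr>phs := (phs s0)(c := WTag r v M')\<rparr>"
    show ?thesis unfolding PS_def Let_def using a f0 by simp
  next
    fix r v M eo M' assume a: "phs s0 c = WTag r v M" "m0 = RTag r eo" "M' = M(j0 \<mapsto> tagval (signed s0) eo)"
      "card (dom M') = q"
      "run (Suc i) = start_put C enc c (Suc (fst (Max {t. \<exists>i. M' i = Some (Some t)})), c) v (\<lambda>r. WPut r {}) s0"
    have r: "r = rnd (run i) c" "dom M \<subseteq> C" using IP a(1) f0 unfolding InvPh_def by auto
    have hon: "\<exists>i'\<le>i. r \<le> rnd (run i') c \<and> M' j = Some (Some (etag (max_entry (lists (run i') j))))"
      if j: "j \<in> dom M' - Byz" for j
    proof (cases "j = j0")
      case True
      then obtain i' where i': "i' \<le> i" "r \<le> rnd (run i') c" "eo = Some (max_entry (lists (run i') j0))"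
        using rep j a(2) unfolding Rep_def by auto
      then have "M' j = Some (Some (etag (max_entry (lists (run i') j0))))"
        using a(3) True tagval_max[of j0 i' i] j0C j f0 by simp
      then show ?thesis using i' True by (intro exI[of _ i']) auto
    next
      case False
      then have "j \<in> dom M - Byz" using j a(3) by auto
      then obtain i' where "i' \<le> i" "r \<le> rnd (run i') c" "M j = Some (Some (etag (max_entry (lists (run i') j))))"
        using HP a(1) f0 unfolding HPh_def by auto
      then show ?thesis using False a(3) by (intro exI[of _ i']) auto
    qed
    have rt: "rtag c (Suc r) = (Suc (fst (Max {t. \<exists>i. M' i = Some (Some t)})), c)"
      using sp_rtag[OF a(5)] f0 r by simp
    have "WSTEP i c r v" unfolding WSTEP_def
      using a(3,4) r j0C hon rt a(5) f0 by (intro exI[of _ M']) (auto simp: sp_simps)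
    then show ?thesis unfolding PS_def Let_def using a(1,5) f0 r by (simp add: sp_simps)
  next
    fix r A assume a: "phs s0 c = WPut r A" "m0 = Ack r" "card (insert j0 A) = q" "run (Suc i) = s0\<lparr>phs := (phs s0)(c := Idle)\<rparr>"
    have AC: "A \<subseteq> C" using IP a(1) f0 unfolding InvPh_def by auto
    have "Pt \<delta> (etag ` lists (run i) j) (rtag c r)" if j: "j \<in> insert j0 A - Byz" for j
    proof (cases "j = j0")
      case True then show ?thesis using rep j a(2) unfolding Rep_def by auto
    next
      case False then show ?thesis using HP a(1) f0 j unfolding HPh_def by auto
    qed
    then have "PSTEP i c r" unfolding PSTEP_def using AC j0C a(3) by (intro exI[of _ "insert j0 A"]) auto
    then show ?thesis unfolding PS_def Let_def using a f0 by simp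
  next
    fix r A assume a: "phs s0 c = WPut r A" "run (Suc i) = s0\<lparr>phs := (phs s0)(c := WPut r (insert j0 A))\<rparr>"
    show ?thesis unfolding PS_def Let_def using a f0 by simp
  next
    fix r M S M' assume a: "phs s0 c = RGet r M" "M' = M(j0 \<mapsto> rdfilter (signed s0) j0 S)"
      "run (Suc i) = s0\<lparr>phs := (phs s0)(c := RGet r M')\<rparr>"
    show ?thesis unfolding PS_def Let_def using a f0 by simp
  next
    fix r M S M' assume a: "phs s0 c = RGet r M" "m0 = RData r S" "M' = M(j0 \<mapsto> rdfilter (signed s0) j0 S)"
      "card (dom M') = q" "candidate_tags k M' \<noteq> {}"
      "run (Suc i) = start_put C enc c (Max (candidate_tags k M')) (rdval dec M' (Max (candidate_tags k M')))
               (\<lambda>r. RPut r (rdval dec M' (Max (candidate_tags k M'))) {}) s0"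
    have r: "r = rnd (run i) c" "dom M \<subseteq> C" "\<forall>j X. M j = Some X \<longrightarrow> X \<subseteq> signed (run i) \<and> (\<forall>e\<in>X. eidx e = j)"
      using IP a(1) f0 unfolding InvPh_def by auto
    have hon: "\<exists>i'\<le>i. r \<le> rnd (run i') c \<and> M' j = Some (lists (run i') j)"
      if j: "j \<in> dom M' - Byz" for j
    proof (cases "j = j0")
      case True
      then obtain i' where i': "i' \<le> i" "r \<le> rnd (run i') c" "S = lists (run i') j0"
        using rep j a(2) unfolding Rep_def by auto
      then have "M' j = Some (lists (run i') j0)"
        using a(3) True rdfilter_id[of j0 i' i] j0C j f0 by simp
      then show ?thesis using i' True by (intro exI[of _ i']) auto
    next
      case False
      then have "j \<in> dom M - Byz" using j a(3) by auto
      then obtain i' where "i' \<le> i" "r \<le> rnd (run i') c" "M j = Some (lists (run i') j)"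
        using HP a(1) f0 unfolding HPh_def by auto
      then show ?thesis using False a(3) by (intro exI[of _ i']) auto
    qed
    have vals: "\<forall>j X. M' j = Some X \<longrightarrow> X \<subseteq> signed (run i) \<and> (\<forall>e\<in>X. eidx e = j)"
      using r(3) a(3) f0 by (auto simp: rdfilter_def)
    have rt: "rtag c (Suc r) = Max (candidate_tags k M')"
      using sp_rtag[OF a(6)] f0 r by simp
    have "RSTEP i c r (rdval dec M' (Max (candidate_tags k M')))" unfolding RSTEP_def
      using a(3,4,5) r j0C hon rt a(6) f0 vals by (intro exI[of _ M']) (auto simp: sp_simps)
    then show ?thesis unfolding PS_def Let_def using a(1,6) f0 r by (simp add: sp_simps)
  next
    fix r v A assume a: "phs s0 c = RPut r v A" "m0 = Ack r" "card (insert j0 A) = q" "run (Suc i) = s0\<lparr>phs := (phs s0)(c := Idle)\<rparr>"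
    have AC: "A \<subseteq> C" using IP a(1) f0 unfolding InvPh_def by auto
    have "Pt \<delta> (etag ` lists (run i) j) (rtag c r)" if j: "j \<in> insert j0 A - Byz" for j
    proof (cases "j = j0")
      case True then show ?thesis using rep j a(2) unfolding Rep_def by auto
    next
      case False then show ?thesis using HP a(1) f0 j unfolding HPh_def by auto
    qed
    then have "PSTEP i c r" unfolding PSTEP_def using AC j0C a(3) by (intro exI[of _ "insert j0 A"]) auto
    then show ?thesis unfolding PS_def Let_def using a f0 by simp
  next
    fix r v A assume a: "phs s0 c = RPut r v A" "run (Suc i) = s0\<lparr>phs := (phs s0)(c := RPut r v (insert j0 A))\<rparr>"
    show ?thesis unfolding PS_def Let_def using a f0 by simp
  qed
qed

lemma PS_all: "PS i c"
  using step[of i] unfolding next_step_def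
proof (elim disjE)
  assume "run (Suc i) = run i" then show ?thesis by (intro PS_same) auto
next
  assume "inv_write C (run i) (run (Suc i))"
  then obtain c0 v where c0: "phs (run i) c0 = Idle" and s': "run (Suc i) = (run i)\<lparr>rnd := (rnd (run i))(c0 := Suc (rnd (run i) c0)), phs := (phs (run i))(c0 := WTag (Suc (rnd (run i) c0)) v Map.empty),
                toNode := toNode (run i) \<union> {(j, Cl c0, QTag (Suc (rnd (run i) c0))) | j. j \<in> C}\<rparr>"
    unfolding inv_write_def Let_def by blast
  show ?thesis
  proof (cases "c = c0")
    case True then show ?thesis unfolding PS_def Let_def using c0 s' by simp
  next
    case False then show ?thesis using s' by (intro PS_same) auto
  qed
next
  assume "inv_read C (run i) (run (Suc i))"
  then obtain c0 where c0: "phs (run i) c0 = Idle" and s': "run (Suc i) = (run i)\<lparr>rnd := (rnd (run i))(c0 := Suc (rnd (run i) c0)), phs := (phs (run i))(c0 := RGet (Suc (rnd (run i) c0)) Map.empty),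
                toNode := toNode (run i) \<union> {(j, Cl c0, QData (Suc (rnd (run i) c0))) | j. j \<in> C}\<rparr>"
    unfolding inv_read_def Let_def by blast
  show ?thesis
  proof (cases "c = c0")
    case True then show ?thesis unfolding PS_def Let_def using c0 s' by simp
  next
    case False then show ?thesis using s' by (intro PS_same) auto
  qed
next
  assume "node_step C Byz \<delta> (run i) (run (Suc i))"
  then obtain j src m where "run (Suc i) = node_recv \<delta> j src m ((run i)\<lparr>toNode := toNode (run i) - {(j, src, m)}\<rparr>)"
    unfolding node_step_def by blast
  note f = node_recv_fields[OF this]
  show ?thesis using f by (intro PS_same) auto
next
  assume "byz_step C Byz (run i) (run (Suc i))"
  then have "phs (run (Suc i)) = phs (run i) \<and> rnd (run (Suc i)) = rnd (run i)"
    unfolding byz_step_def by auto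
  then show ?thesis by (intro PS_same) auto
next
  assume "client_step C k enc dec (run i) (run (Suc i))"
  then obtain c0 j m where inm: "(c0, j, m) \<in> toClient (run i)" and
    eq: "run (Suc i) = client_recv C k enc dec c0 j m ((run i)\<lparr>toClient := toClient (run i) - {(c0, j, m)}\<rparr>)"
    unfolding client_step_def by blast
  show ?thesis
  proof (cases "c = c0")
    case True then show ?thesis using PS_client_same[OF inm eq] by simp
  next
    case False then show ?thesis using client_recv_other[OF eq False] by (intro PS_same) auto
  qed
qed

end



context proto begin

definition r0 :: "'w op \<Rightarrow> nat" where "r0 \<pi> = rnd (run (Suc (snd \<pi>))) (fst \<pi>)"
definition T :: "'w op \<Rightarrow> 'w tag" where "T \<pi> = rtag (fst \<pi>) (Suc (r0 \<pi>))"

definition active :: "'w \<Rightarrow> nat \<Rightarrow> nat \<Rightarrow> bool" where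
  "active c i t \<longleftrightarrow> (\<forall>t'. Suc i \<le> t' \<and> t' \<le> t \<longrightarrow> phs (run t') c \<noteq> Idle)"

lemma invoked_facts:
  assumes "invoked run c i"
  shows "rnd (run (Suc i)) c = Suc (rnd (run i) c) \<and>
    ((\<exists>v. phs (run (Suc i)) c = WTag (rnd (run (Suc i)) c) v Map.empty) \<or> phs (run (Suc i)) c = RGet (rnd (run (Suc i)) c) Map.empty)"
  using PS_all[of i c] assms unfolding PS_def Let_def invoked_def by auto

lemma write_phase:
  assumes "invoked run c i" "phs (run (Suc i)) c = WTag r v Map.empty" "Suc i \<le> t" "active c i t"
  shows "(\<exists>M. phs (run t) c = WTag r v M \<and> rnd (run t) c = r) \<or>
         (\<exists>A. phs (run t) c = WPut (Suc r) A \<and> rnd (run t) c = Suc r \<and>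
            (\<exists>p. Suc i \<le> p \<and> p < t \<and> (\<exists>M. phs (run p) c = WTag r v M) \<and> phs (run (Suc p)) c = WPut (Suc r) {} \<and> WSTEP p c r v))"
  using assms(3,4)
proof (induction t rule: dec_induct)
  case base
  have "r = rnd (run (Suc i)) c" using InvPh_run[of "Suc i" c] assms(2) unfolding InvPh_def by simp
  then show ?case using assms(2) by auto
next
  case (step n)
  have act: "active c i n" using step.prems unfolding active_def by auto
  have ni: "phs (run (Suc n)) c \<noteq> Idle" using step.prems step.hyps unfolding active_def by auto
  from step.IH[OF act] show ?case
  proof (elim disjE exE conjE)
    fix M assume a: "phs (run n) c = WTag r v M" "rnd (run n) c = r"
    show ?thesis using PS_all[of n c] a ni step.hyps unfolding PS_def Let_def by (auto 0 3 intro: exI[of _ n])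
  next
    fix A p M assume a: "phs (run n) c = WPut (Suc r) A" "rnd (run n) c = Suc r" "Suc i \<le> p" "p < n"
      "phs (run p) c = WTag r v M" "phs (run (Suc p)) c = WPut (Suc r) {}" "WSTEP p c r v"
    have "\<exists>A'. phs (run (Suc n)) c = WPut (Suc r) A' \<and> rnd (run (Suc n)) c = Suc r"
      using PS_all[of n c] a(1,2) ni unfolding PS_def Let_def by auto
    then show ?thesis using a by (metis less_SucI)
  qed
qed

lemma read_phase:
  assumes "invoked run c i" "phs (run (Suc i)) c = RGet r Map.empty" "Suc i \<le> t" "active c i t"
  shows "(\<exists>M. phs (run t) c = RGet r M \<and> rnd (run t) c = r) \<or>
         (\<exists>v A. phs (run t) c = RPut (Suc r) v A \<and> rnd (run t) c = Suc r \<and>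
            (\<exists>p. Suc i \<le> p \<and> p < t \<and> (\<exists>M. phs (run p) c = RGet r M) \<and> phs (run (Suc p)) c = RPut (Suc r) v {} \<and> RSTEP p c r v))"
  using assms(3,4)
proof (induction t rule: dec_induct)
  case base
  have "r = rnd (run (Suc i)) c" using InvPh_run[of "Suc i" c] assms(2) unfolding InvPh_def by simp
  then show ?case using assms(2) by auto
next
  case (step n)
  have act: "active c i n" using step.prems unfolding active_def by auto
  have ni: "phs (run (Suc n)) c \<noteq> Idle" using step.prems step.hyps unfolding active_def by auto
  from step.IH[OF act] show ?case
  proof (elim disjE exE conjE)
    fix M assume a: "phs (run n) c = RGet r M" "rnd (run n) c = r"
    show ?thesis using PS_all[of n c] a ni step.hyps unfolding PS_def Let_def by (auto 0 3 intro: exI[of _ n])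
  next
    fix v A p M assume a: "phs (run n) c = RPut (Suc r) v A" "rnd (run n) c = Suc r" "Suc i \<le> p" "p < n"
      "phs (run p) c = RGet r M" "phs (run (Suc p)) c = RPut (Suc r) v {}" "RSTEP p c r v"
    have "\<exists>A'. phs (run (Suc n)) c = RPut (Suc r) v A' \<and> rnd (run (Suc n)) c = Suc r"
      using PS_all[of n c] a(1,2) ni unfolding PS_def Let_def by auto
    then show ?thesis using a by (metis less_SucI)
  qed
qed

definition stored :: "nat \<Rightarrow> 'w tag \<Rightarrow> bool" where
  "stored t Tg \<longleftrightarrow> (\<exists>Q. Q \<subseteq> C \<and> card Q = q \<and> (\<forall>j \<in> Q - Byz. Pt \<delta> (etag ` lists (run t) j) Tg))"

lemma stored_mono: assumes "stored t Tg" "t \<le> t'" shows "stored t' Tg"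
proof -
  obtain Q where Q: "Q \<subseteq> C" "card Q = q" "\<forall>j \<in> Q - Byz. Pt \<delta> (etag ` lists (run t) j) Tg"
    using assms(1) unfolding stored_def by blast
  have "\<forall>j \<in> Q - Byz. Pt \<delta> (etag ` lists (run t') j) Tg"
  proof
    fix j assume j: "j \<in> Q - Byz"
    then have P: "Pt \<delta> (etag ` lists (run t) j) Tg" using Q(3) by blast
    show "Pt \<delta> (etag ` lists (run t') j) Tg" by (rule Pt_stable[OF _ P assms(2)]) (use j Q(1) in blast)
  qed
  then show ?thesis using Q unfolding stored_def by blast
qed

lemma resp_facts:
  assumes "complete run (c, i)"
  shows "i < resp_time run (c, i) \<and> responds run c (resp_time run (c, i)) \<and>
         (\<forall>j. i < j \<and> responds run c j \<longrightarrow> resp_time run (c, i) \<le> j)"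
proof -
  have ex: "\<exists>j. i < j \<and> responds run c j" using assms unfolding complete_def by auto
  show ?thesis unfolding resp_time_def using LeastI_ex[OF ex] Least_le[of "\<lambda>j. i < j \<and> responds run c j"] by auto
qed

lemma first_idle_responds:
  assumes "invoked run c i" "Suc i \<le> t" "phs (run t) c = Idle"
  shows "\<exists>j. i < j \<and> j < t \<and> responds run c j"
proof -
  define t0 where "t0 = (LEAST t'. Suc i \<le> t' \<and> phs (run t') c = Idle)"
  have t0: "Suc i \<le> t0" "phs (run t0) c = Idle" "t0 \<le> t"
    using LeastI[of "\<lambda>t'. Suc i \<le> t' \<and> phs (run t') c = Idle" t] Least_le[of "\<lambda>t'. Suc i \<le> t' \<and> phs (run t') c = Idle" t]
      assms unfolding t0_def by auto
  have "t0 \<noteq> Suc i" using assms(1) t0(2) unfolding invoked_def by auto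
  then obtain j where j: "t0 = Suc j" "Suc i \<le> j" using t0(1) by (cases t0) auto
  have "phs (run j) c \<noteq> Idle"
  proof
    assume "phs (run j) c = Idle"
    then have "t0 \<le> j" unfolding t0_def using j(2) by (intro Least_le) auto
    then show False using j(1) by simp
  qed
  then have "responds run c j" using t0(2) j(1) unfolding responds_def by simp
  then show ?thesis using j t0 by (intro exI[of _ j]) auto
qed

lemma complete_active:
  assumes "invoked run c i" "complete run (c, i)"
  shows "active c i (resp_time run (c, i))"
  unfolding active_def
proof (intro allI impI notI)
  fix t' assume a: "Suc i \<le> t' \<and> t' \<le> resp_time run (c, i)" "phs (run t') c = Idle"
  then obtain j where "i < j" "j < t'" "responds run c j" using first_idle_responds[OF assms(1)] by blast
  then have "resp_time run (c, i) \<le> j" using resp_facts[OF assms(2)] by blast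
  then show False using a \<open>j < t'\<close> by simp
qed

lemma incomplete_active:
  assumes "invoked run c i" "\<not> complete run (c, i)"
  shows "active c i t"
  unfolding active_def
proof (intro allI impI notI)
  fix t' assume a: "Suc i \<le> t' \<and> t' \<le> t" "phs (run t') c = Idle"
  then obtain j where "i < j" "responds run c j" using first_idle_responds[OF assms(1)] by blast
  then show False using assms(2) unfolding complete_def by auto
qed

lemma lex_suc_less: "(x :: 'w tag) \<le> y \<Longrightarrow> x < (Suc (fst y), c)"
  by (cases x; cases y) (auto simp: less_prod_def less_eq_prod_def)

lemma lex_fst_pos: "0 < fst (x :: 'w tag) \<Longrightarrow> (0, w0) < x"
  by (cases x) (auto simp: less_prod_def)

definition wstart :: "'w op \<Rightarrow> nat \<Rightarrow> bool" where
  "wstart \<omega> p \<longleftrightarrow> invoked run (fst \<omega>) (snd \<omega>) \<and> Suc (snd \<omega>) \<le> p \<and>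
     (\<exists>M. phs (run (Suc (snd \<omega>))) (fst \<omega>) = WTag (r0 \<omega>) (written_val run \<omega>) Map.empty \<and>
          phs (run p) (fst \<omega>) = WTag (r0 \<omega>) (written_val run \<omega>) M \<and>
          phs (run (Suc p)) (fst \<omega>) = WPut (Suc (r0 \<omega>)) {} \<and> WSTEP p (fst \<omega>) (r0 \<omega>) (written_val run \<omega>))"

definition rstart :: "'w op \<Rightarrow> nat \<Rightarrow> 'v \<Rightarrow> bool" where
  "rstart \<rho> p v \<longleftrightarrow> invoked run (fst \<rho>) (snd \<rho>) \<and> Suc (snd \<rho>) \<le> p \<and>
     (\<exists>M. phs (run (Suc (snd \<rho>))) (fst \<rho>) = RGet (r0 \<rho>) Map.empty \<and>
          phs (run p) (fst \<rho>) = RGet (r0 \<rho>) M \<and>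
          phs (run (Suc p)) (fst \<rho>) = RPut (Suc (r0 \<rho>)) v {} \<and> RSTEP p (fst \<rho>) (r0 \<rho>) v)"

lemma write_op_cases:
  assumes "invoked run c i" "phs (run (Suc i)) c = WTag r v Map.empty" "Suc i \<le> t" "active c i t"
    "phs (run t) c = WPut r' A"
  shows "r' = Suc (r0 (c, i)) \<and> (\<exists>p. p < t \<and> wstart (c, i) p)"
proof -
  have r: "r = r0 (c, i)" using InvPh_run[of "Suc i" c] assms(2) unfolding InvPh_def r0_def by simp
  have wv: "written_val run (c, i) = v" using assms(2) unfolding written_val_def by simp
  from write_phase[OF assms(1-4)] assms(5) obtain p M where
    p: "r' = Suc r" "Suc i \<le> p" "p < t" "phs (run p) c = WTag r v M" "phs (run (Suc p)) c = WPut (Suc r) {}" "WSTEP p c r v"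
    by auto
  then show ?thesis using r wv assms(1,2) unfolding wstart_def by auto
qed

lemma read_op_cases:
  assumes "invoked run c i" "phs (run (Suc i)) c = RGet r Map.empty" "Suc i \<le> t" "active c i t"
    "phs (run t) c = RPut r' v A"
  shows "r' = Suc (r0 (c, i)) \<and> (\<exists>p. p < t \<and> rstart (c, i) p v)"
proof -
  have r: "r = r0 (c, i)" using InvPh_run[of "Suc i" c] assms(2) unfolding InvPh_def r0_def by simp
  from read_phase[OF assms(1-4)] assms(5) obtain p M where
    p: "r' = Suc r" "Suc i \<le> p" "p < t" "phs (run p) c = RGet r M" "phs (run (Suc p)) c = RPut (Suc r) v {}" "RSTEP p c r v"
    by auto
  then show ?thesis using r assms(1,2) unfolding rstart_def by auto
qed

lemma complete_op:
  assumes inv: "invoked run c i" and cp: "complete run (c, i)"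
  shows "stored (resp_time run (c, i)) (T (c, i)) \<and>
    (is_write run (c, i) \<longrightarrow> (\<exists>p. p < resp_time run (c, i) \<and> wstart (c, i) p)) \<and>
    (is_read run (c, i) \<longrightarrow> (\<exists>p. p < resp_time run (c, i) \<and> rstart (c, i) p (returned_val run (c, i))))"
proof -
  define R where "R = resp_time run (c, i)"
  have rf: "i < R" "responds run c R" using resp_facts[OF cp] unfolding R_def by auto
  have act: "active c i R" using complete_active[OF inv cp] unfolding R_def .
  have ni: "phs (run R) c \<noteq> Idle" "phs (run (Suc R)) c = Idle" using rf(2) unfolding responds_def by auto
  from PS_all[of R c] ni obtain r' where
    fin: "(\<exists>A. phs (run R) c = WPut r' A \<and> PSTEP R c r') \<or> (\<exists>v A. phs (run R) c = RPut r' v A \<and> PSTEP R c r')"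
    unfolding PS_def Let_def by auto
  from invoked_facts[OF inv] show ?thesis
  proof (elim disjE exE conjE)
    fix v assume w: "phs (run (Suc i)) c = WTag (rnd (run (Suc i)) c) v Map.empty"
    have nr: "\<not> is_read run (c, i)" using w unfolding is_read_def by simp
    from fin show ?thesis
    proof (elim disjE exE conjE)
      fix A assume a: "phs (run R) c = WPut r' A" "PSTEP R c r'"
      from write_op_cases[OF inv w _ act a(1)] rf(1) obtain p where
        "r' = Suc (r0 (c, i))" "p < R" "wstart (c, i) p" by auto
      then show ?thesis using a(2) nr unfolding R_def[symmetric] PSTEP_def stored_def T_def by auto
    next
      fix v' A assume a: "phs (run R) c = RPut r' v' A"
      from write_phase[OF inv w _ act] rf(1) a show ?thesis by auto
    qed
  next
    assume rd: "phs (run (Suc i)) c = RGet (rnd (run (Suc i)) c) Map.empty"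
    have nw: "\<not> is_write run (c, i)" using rd unfolding is_write_def by simp
    from fin show ?thesis
    proof (elim disjE exE conjE)
      fix A assume a: "phs (run R) c = WPut r' A"
      from read_phase[OF inv rd _ act] rf(1) a show ?thesis by auto
    next
      fix v' A assume a: "phs (run R) c = RPut r' v' A" "PSTEP R c r'"
      have rv: "returned_val run (c, i) = v'" using a(1) unfolding returned_val_def R_def by simp
      from read_op_cases[OF inv rd _ act a(1)] rf(1) obtain p where
        "r' = Suc (r0 (c, i))" "p < R" "rstart (c, i) p v'" by auto
      then show ?thesis using a(2) nw rv unfolding R_def[symmetric] PSTEP_def stored_def T_def by auto
    qed
  qed
qed

lemma inter_nonempty:
  assumes "A \<subseteq> C" "B \<subseteq> C" "card A = q" "card B = q"
  shows "\<exists>j. j \<in> A \<and> j \<in> B \<and> j \<notin> Byz"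
proof -
  have "0 < card ((A \<inter> B) - Byz)" using quorum_inter[OF assms] by simp
  then have "(A \<inter> B) - Byz \<noteq> {}" by (metis card.empty less_irrefl)
  then show ?thesis by blast
qed

lemma r0_invoked: "invoked run c i \<Longrightarrow> r0 (c, i) = Suc (rnd (run i) c)"
  using invoked_facts unfolding r0_def by simp

lemma later_than_invocation:
  assumes "invoked run c i" "r0 (c, i) \<le> rnd (run i') c"
  shows "i < i'"
proof (rule ccontr)
  assume "\<not> i < i'"
  then have "rnd (run i') c \<le> rnd (run i) c" using rnd_mono by simp
  then show False using assms r0_invoked by fastforce
qed

lemma wstart_gt:
  assumes ws: "wstart \<omega> p" and st: "stored t Tg" and tle: "t \<le> snd \<omega>"
  shows "Tg < T \<omega>"
proof -
  obtain c i where om: "\<omega> = (c, i)" by (cases \<omega>)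
  have inv: "invoked run c i" using ws unfolding wstart_def om by simp
  obtain v where W: "WSTEP p c (r0 \<omega>) v" using ws unfolding wstart_def om by auto
  then obtain M' where M': "card (dom M') = q" "dom M' \<subseteq> C"
     "\<forall>j \<in> dom M' - Byz. \<exists>i'\<le>p. r0 \<omega> \<le> rnd (run i') c \<and> M' j = Some (Some (etag (max_entry (lists (run i') j))))"
     "rtag c (Suc (r0 \<omega>)) = (Suc (fst (Max {t. \<exists>j. M' j = Some (Some t)})), c)"
    unfolding WSTEP_def by blast
  obtain Q where Q: "Q \<subseteq> C" "card Q = q" "\<forall>j \<in> Q - Byz. Pt \<delta> (etag ` lists (run t) j) Tg"
    using st unfolding stored_def by blast
  obtain j where j: "j \<in> Q" "j \<in> dom M'" "j \<notin> Byz" using inter_nonempty[OF Q(1) M'(2) Q(2) M'(1)] by blast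
  obtain i' where i': "i' \<le> p" "r0 \<omega> \<le> rnd (run i') c" "M' j = Some (Some (etag (max_entry (lists (run i') j))))"
    using M'(3) j by blast
  have "i < i'" using later_than_invocation[OF inv] i'(2) om by simp
  then have "t \<le> i'" using tle om by simp
  have jC: "j \<in> C - Byz" using j Q(1) by blast
  have "Pt \<delta> (etag ` lists (run i') j) Tg" using Pt_stable[OF jC _ \<open>t \<le> i'\<close>] Q(3) j by blast
  moreover have "finite (lists (run i') j)" "lists (run i') j \<noteq> {}" using InvL_run[of i'] jC unfolding InvL_def by blast+
  ultimately have le1: "Tg \<le> etag (max_entry (lists (run i') j))" using Pt_max by blast
  define S where "S = {t. \<exists>j. M' j = Some (Some t)}"
  have "S \<subseteq> (\<lambda>j. the (the (M' j))) ` dom M'" unfolding S_def by force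
  moreover have "finite (dom M')" using M'(2) finC finite_subset by blast
  ultimately have fS: "finite S" using finite_subset by blast
  have "etag (max_entry (lists (run i') j)) \<in> S" using i'(3) unfolding S_def by blast
  then have "Tg \<le> Max S" using le1 Max_ge[OF fS] order.trans by blast
  then have "Tg < (Suc (fst (Max S)), c)" by (rule lex_suc_less)
  then show ?thesis using M'(4) unfolding T_def S_def om by simp
qed

lemma rstart_ge:
  assumes rs: "rstart \<rho> p v" and st: "stored t Tg" and tle: "t \<le> snd \<rho>"
    and bound: "\<forall>j \<in> C - Byz. \<forall>i'. snd \<rho> < i' \<and> i' \<le> p \<longrightarrow> card {x \<in> etag ` lists (run i') j. Tg < x} \<le> \<delta>"
  shows "Tg \<le> T \<rho>"
proof -
  obtain c i where om: "\<rho> = (c, i)" by (cases \<rho>)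
  have inv: "invoked run c i" using rs unfolding rstart_def om by simp
  have R: "RSTEP p c (r0 \<rho>) v" using rs unfolding rstart_def om by auto
  obtain M' where M': "card (dom M') = q" "dom M' \<subseteq> C"
     "\<forall>j \<in> dom M' - Byz. \<exists>i'\<le>p. r0 \<rho> \<le> rnd (run i') c \<and> M' j = Some (lists (run i') j)"
     "\<forall>j X. M' j = Some X \<longrightarrow> X \<subseteq> signed (run p) \<and> (\<forall>e\<in>X. eidx e = j)"
     "candidate_tags k M' \<noteq> {}" "rtag c (Suc (r0 \<rho>)) = Max (candidate_tags k M')"
  proof -
    obtain M' where h: "card (dom M') = q \<and> dom M' \<subseteq> C \<and>
     (\<forall>j \<in> dom M' - Byz. \<exists>i'\<le>p. r0 \<rho> \<le> rnd (run i') c \<and> M' j = Some (lists (run i') j)) \<and>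
     (\<forall>j X. M' j = Some X \<longrightarrow> X \<subseteq> signed (run p) \<and> (\<forall>e\<in>X. eidx e = j)) \<and>
     candidate_tags k M' \<noteq> {} \<and> rtag c (Suc (r0 \<rho>)) = Max (candidate_tags k M') \<and>
     v = rdval dec M' (Max (candidate_tags k M')) \<and>
     signed (run (Suc p)) = signed (run p) \<union> {(rtag c (Suc (r0 \<rho>)), j, enc v j) | j. j \<in> C}"
      using R unfolding RSTEP_def by (rule exE)
    show thesis using h by (elim conjE) (rule that[of M']; assumption)
  qed
  obtain Q where Q: "Q \<subseteq> C" "card Q = q" "\<forall>j \<in> Q - Byz. Pt \<delta> (etag ` lists (run t) j) Tg"
    using st unfolding stored_def by blast
  define Y where "Y = {j \<in> dom M'. \<exists>e \<in> the (M' j). etag e = Tg}"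
  have XY: "(Q \<inter> dom M') - Byz \<subseteq> Y"
  proof
    fix j assume j: "j \<in> (Q \<inter> dom M') - Byz"
    obtain i' where i': "i' \<le> p" "r0 \<rho> \<le> rnd (run i') c" "M' j = Some (lists (run i') j)"
      using M'(3) j by blast
    have "i < i'" using later_than_invocation[OF inv] i'(2) om by simp
    then have "t \<le> i'" using tle om by simp
    have jC: "j \<in> C - Byz" using j Q(1) by blast
    have P: "Pt \<delta> (etag ` lists (run i') j) Tg" using Pt_stable[OF jC _ \<open>t \<le> i'\<close>] Q(3) j by blast
    have "snd \<rho> < i' \<and> i' \<le> p" using \<open>i < i'\<close> i'(1) om by simp
    then have "card {x \<in> etag ` lists (run i') j. Tg < x} \<le> \<delta>" using bound jC by blast
    then have "Tg \<in> etag ` lists (run i') j" using P unfolding Pt_def by linarith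
    then show "j \<in> Y" using i'(3) j unfolding Y_def by auto
  qed
  have fd: "finite (dom M')" using M'(2) finC finite_subset by blast
  have "k < card ((Q \<inter> dom M') - Byz)" using quorum_inter[OF Q(1) M'(2) Q(2) M'(1)] .
  also have "\<dots> \<le> card Y" using XY fd unfolding Y_def by (intro card_mono) auto
  finally have "k \<le> card Y" by simp
  then have "Tg \<in> candidate_tags k M'" unfolding candidate_tags_def Y_def by simp
  moreover have "finite (candidate_tags k M')"
  proof -
    have "\<forall>i X. M' i = Some X \<longrightarrow> X \<subseteq> signed (run p)" using M'(4) by blast
    then have "candidate_tags k M' \<subseteq> etag ` signed (run p)" using k1 by (rule cand_sub)
    moreover have "finite (signed (run p))" using InvS_run[of p] unfolding InvS_def by blast
    ultimately show ?thesis using finite_subset by blast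
  qed
  ultimately have "Tg \<le> Max (candidate_tags k M')" by simp
  then show ?thesis using M'(6) unfolding T_def om by simp
qed

lemma wf_ops:
  assumes "invoked run c i1" "invoked run c i2" "i1 < i2"
  shows "complete run (c, i1) \<and> resp_time run (c, i1) < i2"
proof -
  have "phs (run i2) c = Idle" using assms(2) unfolding invoked_def by simp
  moreover have "Suc i1 \<le> i2" using assms(3) by simp
  ultimately have "\<exists>j. i1 < j \<and> j < i2 \<and> responds run c j" using first_idle_responds[OF assms(1)] by blast
  then obtain j where j: "i1 < j" "j < i2" "responds run c j" by blast
  then have cp: "complete run (c, i1)" unfolding complete_def by auto
  then have "resp_time run (c, i1) \<le> j" using resp_facts[OF cp] j by blast
  then show ?thesis using cp j by simp
qed

lemma wstart_tag:
  assumes "wstart \<omega> p"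
  shows "snd (T \<omega>) = fst \<omega> \<and> 0 < fst (T \<omega>)"
proof -
  obtain v where W: "WSTEP p (fst \<omega>) (r0 \<omega>) v" using assms unfolding wstart_def by auto
  obtain M' where "card (dom M') = q \<and> dom M' \<subseteq> C \<and>
     (\<forall>j \<in> dom M' - Byz. \<exists>i'\<le>p. r0 \<omega> \<le> rnd (run i') (fst \<omega>) \<and> M' j = Some (Some (etag (max_entry (lists (run i') j))))) \<and>
     rtag (fst \<omega>) (Suc (r0 \<omega>)) = (Suc (fst (Max {t. \<exists>j. M' j = Some (Some t)})), fst \<omega>) \<and>
     signed (run (Suc p)) = signed (run p) \<union> {(rtag (fst \<omega>) (Suc (r0 \<omega>)), j, enc v j) | j. j \<in> C}"
    using W unfolding WSTEP_def by (rule exE)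
  then show ?thesis unfolding T_def by simp
qed

lemma wstart_unique:
  assumes w1: "wstart \<omega>1 p1" and w2: "wstart \<omega>2 p2" and eq: "T \<omega>1 = T \<omega>2"
  shows "\<omega>1 = \<omega>2"
proof -
  obtain c1 i1 where o1: "\<omega>1 = (c1, i1)" by (cases \<omega>1)
  obtain c2 i2 where o2: "\<omega>2 = (c2, i2)" by (cases \<omega>2)
  have "c1 = c2" using wstart_tag[OF w1] wstart_tag[OF w2] eq o1 o2 by simp
  have inv1: "invoked run c1 i1" using w1 o1 unfolding wstart_def by simp
  have inv2: "invoked run c1 i2" using w2 o2 \<open>c1 = c2\<close> unfolding wstart_def by simp
  have "\<not> i1 < i2"
  proof
    assume "i1 < i2"
    from wf_ops[OF inv1 inv2 this] have cp: "complete run (c1, i1)" "resp_time run (c1, i1) < i2" by auto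
    have "stored (resp_time run (c1, i1)) (T (c1, i1))" using complete_op[OF inv1 cp(1)] by blast
    then have "T (c1, i1) < T \<omega>2" using wstart_gt[OF w2] cp(2) o2 by simp
    then show False using eq o1 by simp
  qed
  moreover have "\<not> i2 < i1"
  proof
    assume "i2 < i1"
    from wf_ops[OF inv2 inv1 this] have cp: "complete run (c1, i2)" "resp_time run (c1, i2) < i1" by auto
    have "stored (resp_time run (c1, i2)) (T (c1, i2))" using complete_op[OF inv2 cp(1)] by blast
    then have "T (c1, i2) < T \<omega>1" using wstart_gt[OF w1] cp(2) o1 by simp
    then show False using eq o2 \<open>c1 = c2\<close> by simp
  qed
  ultimately show ?thesis using o1 o2 \<open>c1 = c2\<close> by simp
qed

lemma current_op:
  assumes "phs (run n) c \<noteq> Idle"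
  shows "\<exists>i < n. invoked run c i \<and> active c i n"
  using assms
proof (induction n)
  case 0 then show ?case by (simp add: run0 init_state_def)
next
  case (Suc n)
  show ?case
  proof (cases "phs (run n) c = Idle")
    case True
    then have "invoked run c n" using Suc.prems unfolding invoked_def by simp
    then show ?thesis using Suc.prems unfolding active_def by (intro exI[of _ n]) auto
  next
    case False
    then obtain i where "i < n" "invoked run c i" "active c i n" using Suc.IH by blast
    then show ?thesis using Suc.prems unfolding active_def by (intro exI[of _ i]) (auto simp: le_Suc_eq)
  qed
qed

end



context proto begin

lemma signed_change:
  assumes "signed (run (Suc n)) \<noteq> signed (run n)"
  shows "\<exists>c. (\<exists>r v M. phs (run n) c = WTag r v M \<and> phs (run (Suc n)) c = WPut (Suc r) {}) \<or>
             (\<exists>r M v. phs (run n) c = RGet r M \<and> phs (run (Suc n)) c = RPut (Suc r) v {})"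
  using step[of n] unfolding next_step_def
proof (elim disjE)
  assume "client_step C k enc dec (run n) (run (Suc n))"
  then obtain c0 j m where inm: "(c0, j, m) \<in> toClient (run n)" and
    eq: "run (Suc n) = client_recv C k enc dec c0 j m ((run n)\<lparr>toClient := toClient (run n) - {(c0, j, m)}\<rparr>)"
    unfolding client_step_def by blast
  define s0 where "s0 = (run n)\<lparr>toClient := toClient (run n) - {(c0, j, m)}\<rparr>"
  have f0: "phs s0 = phs (run n)" "signed s0 = signed (run n)" "rnd s0 = rnd (run n)" unfolding s0_def by simp_all
  have IP: "InvPh (run n) c0" by (rule InvPh_run)
  from client_recv_cases[OF eq[folded s0_def] refl] show ?thesis
  proof (elim disjE exE conjE)
    fix r v M eo M'
    assume a: "phs s0 c0 = WTag r v M"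
      "run (Suc n) = start_put C enc c0 (Suc (fst (Max {t. \<exists>i. M' i = Some (Some t)})), c0) v (\<lambda>r. WPut r {}) s0"
    have "r = rnd (run n) c0" using IP a(1) f0 unfolding InvPh_def by simp
    then show ?thesis using a f0 by (intro exI[of _ c0]) (simp add: sp_simps)
  next
    fix r M S M'
    assume a: "phs s0 c0 = RGet r M"
      "run (Suc n) = start_put C enc c0 (Max (candidate_tags k M')) (rdval dec M' (Max (candidate_tags k M')))
               (\<lambda>r. RPut r (rdval dec M' (Max (candidate_tags k M'))) {}) s0"
    have "r = rnd (run n) c0" using IP a(1) f0 unfolding InvPh_def by simp
    then show ?thesis using a f0 by (intro exI[of _ c0]) (simp add: sp_simps)
  qed (use assms f0 in \<open>auto simp: s0_def\<close>)
next
  assume "node_step C Byz \<delta> (run n) (run (Suc n))"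
  then obtain j src m where "run (Suc n) = node_recv \<delta> j src m ((run n)\<lparr>toNode := toNode (run n) - {(j, src, m)}\<rparr>)"
    unfolding node_step_def by blast
  note f = node_recv_fields[OF this]
  have "signed (run (Suc n)) = signed (run n)" using f by simp
  then show ?thesis using assms by simp
next
  assume "inv_write C (run n) (run (Suc n))"
  then have "signed (run (Suc n)) = signed (run n)" unfolding inv_write_def Let_def by auto
  then show ?thesis using assms by simp
next
  assume "inv_read C (run n) (run (Suc n))"
  then have "signed (run (Suc n)) = signed (run n)" unfolding inv_read_def Let_def by auto
  then show ?thesis using assms by simp
next
  assume "byz_step C Byz (run n) (run (Suc n))"
  then have "signed (run (Suc n)) = signed (run n)" unfolding byz_step_def by auto
  then show ?thesis using assms by simp
qed (use assms in simp)

definition SI :: "nat \<Rightarrow> bool" where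
  "SI n \<longleftrightarrow> (\<forall>e \<in> signed (run n). (etag e = (0, w0) \<and> eelem e = enc v0 (eidx e)) \<or>
     (\<exists>\<omega> p. wstart \<omega> p \<and> p < n \<and> T \<omega> = etag e \<and> eelem e = enc (written_val run \<omega>) (eidx e)))"

lemma mds_apply: "X \<subseteq> (\<lambda>j. (j, enc V j)) ` C \<Longrightarrow> k \<le> card X \<Longrightarrow> dec X = V"
  using mds unfolding mds_code_def by blast

lemma read_value:
  assumes SI: "SI p" and R: "RSTEP p c r v"
  shows "(rtag c (Suc r) = (0, w0) \<and> v = v0) \<or>
         (\<exists>\<omega> p'. wstart \<omega> p' \<and> p' < p \<and> T \<omega> = rtag c (Suc r) \<and> v = written_val run \<omega>)"
proof -
  obtain M' where h: "card (dom M') = q \<and> dom M' \<subseteq> C \<and>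
     (\<forall>j \<in> dom M' - Byz. \<exists>i'\<le>p. r \<le> rnd (run i') c \<and> M' j = Some (lists (run i') j)) \<and>
     (\<forall>j X. M' j = Some X \<longrightarrow> X \<subseteq> signed (run p) \<and> (\<forall>e\<in>X. eidx e = j)) \<and>
     candidate_tags k M' \<noteq> {} \<and> rtag c (Suc r) = Max (candidate_tags k M') \<and>
     v = rdval dec M' (Max (candidate_tags k M')) \<and>
     signed (run (Suc p)) = signed (run p) \<union> {(rtag c (Suc r), j, enc v j) | j. j \<in> C}"
    using R unfolding RSTEP_def by (rule exE)
  have vals: "\<forall>j X. M' j = Some X \<longrightarrow> X \<subseteq> signed (run p) \<and> (\<forall>e\<in>X. eidx e = j)" using h by simp
  have cne: "candidate_tags k M' \<noteq> {}" using h by simp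
  define Tn where "Tn = Max (candidate_tags k M')"
  have rt: "rtag c (Suc r) = Tn" using h unfolding Tn_def by simp
  define X where "X = {(eidx e, eelem e) | e. e \<in> \<Union>(ran M') \<and> etag e = Tn}"
  have vv: "v = dec X" using h unfolding X_def Tn_def rdval_def by simp
  have fS: "finite (signed (run p))" using InvS_run[of p] unfolding InvS_def by blast
  have fc: "finite (candidate_tags k M')"
  proof -
    have "\<forall>i X. M' i = Some X \<longrightarrow> X \<subseteq> signed (run p)" using vals by blast
    then have "candidate_tags k M' \<subseteq> etag ` signed (run p)" using k1 by (rule cand_sub)
    then show ?thesis using fS finite_subset by blast
  qed
  have "Tn \<in> candidate_tags k M'" unfolding Tn_def using Max_in[OF fc cne] .
  then have kY: "k \<le> card {i \<in> dom M'. \<exists>e \<in> the (M' i). etag e = Tn}" unfolding candidate_tags_def by simp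
  have Esig: "e \<in> signed (run p)" "eidx e \<in> C" if "e \<in> \<Union>(ran M')" for e
  proof -
    from that obtain i Xi where "M' i = Some Xi" "e \<in> Xi" unfolding ran_def by blast
    then show "e \<in> signed (run p)" using vals by blast
    then show "eidx e \<in> C" using InvS_run[of p] unfolding InvS_def by blast
  qed
  have fX: "finite X"
  proof -
    have "X \<subseteq> (\<lambda>e. (eidx e, eelem e)) ` signed (run p)"
    proof
      fix x assume "x \<in> X"
      then obtain e where e: "x = (eidx e, eelem e)" "e \<in> \<Union>(ran M')" unfolding X_def by blast
      then show "x \<in> (\<lambda>e. (eidx e, eelem e)) ` signed (run p)" using Esig(1)[OF e(2)] by (intro image_eqI[of _ _ e]) auto
    qed
    then show ?thesis using fS finite_subset by blast
  qed
  define f where "f i = (i, eelem (SOME e. e \<in> the (M' i) \<and> etag e = Tn))" for i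
  have "card {i \<in> dom M'. \<exists>e \<in> the (M' i). etag e = Tn} \<le> card X"
  proof (rule card_inj_on_le[of f])
    show "inj_on f {i \<in> dom M'. \<exists>e \<in> the (M' i). etag e = Tn}" unfolding f_def inj_on_def by simp
    show "finite X" by (rule fX)
    show "f ` {i \<in> dom M'. \<exists>e \<in> the (M' i). etag e = Tn} \<subseteq> X"
    proof
      fix x assume "x \<in> f ` {i \<in> dom M'. \<exists>e \<in> the (M' i). etag e = Tn}"
      then obtain i where i: "i \<in> dom M'" "\<exists>e \<in> the (M' i). etag e = Tn" and x: "x = f i" by blast
      define e where "e = (SOME e. e \<in> the (M' i) \<and> etag e = Tn)"
      have e: "e \<in> the (M' i)" "etag e = Tn" using someI_ex[of "\<lambda>e. e \<in> the (M' i) \<and> etag e = Tn"] i(2) unfolding e_def by blast+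
      obtain Xi where Xi: "M' i = Some Xi" using i(1) by blast
      have "e \<in> \<Union>(ran M')" using e(1) Xi unfolding ran_def by auto
      moreover have "eidx e = i" using vals Xi e(1) by simp
      ultimately have "(i, eelem e) \<in> X" unfolding X_def using e(2) by (intro CollectI exI[of _ e]) simp
      then show "x \<in> X" unfolding x f_def e_def .
    qed
  qed
  then have kX: "k \<le> card X" using kY by linarith
  have "{i \<in> dom M'. \<exists>e \<in> the (M' i). etag e = Tn} \<noteq> {}" using kY k1 by (metis card.empty not_one_le_zero le_trans)
  then obtain e0 where e0: "e0 \<in> \<Union>(ran M')" "etag e0 = Tn"
    unfolding ran_def by (auto, metis option.sel)
  show ?thesis
  proof (cases "Tn = (0, w0)")
    case True
    have "X \<subseteq> (\<lambda>j. (j, enc v0 j)) ` C"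
    proof
      fix x assume "x \<in> X"
      then obtain e where e: "x = (eidx e, eelem e)" "e \<in> \<Union>(ran M')" "etag e = Tn" unfolding X_def by blast
      have "eelem e = enc v0 (eidx e)"
      proof -
        from SI Esig(1)[OF e(2)] have "(etag e = (0, w0) \<and> eelem e = enc v0 (eidx e)) \<or>
          (\<exists>\<omega> p'. wstart \<omega> p' \<and> p' < p \<and> T \<omega> = etag e \<and> eelem e = enc (written_val run \<omega>) (eidx e))"
          unfolding SI_def by blast
        then show ?thesis using wstart_tag e(3) True by force
      qed
      then show "x \<in> (\<lambda>j. (j, enc v0 j)) ` C" using e(1) Esig(2)[OF e(2)] by blast
    qed
    then have "v = v0" using vv mds_apply kX by simp
    then show ?thesis using rt True by simp
  next
    case False
    from SI Esig(1)[OF e0(1)] have "(etag e0 = (0, w0) \<and> eelem e0 = enc v0 (eidx e0)) \<or>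
          (\<exists>\<omega> p'. wstart \<omega> p' \<and> p' < p \<and> T \<omega> = etag e0 \<and> eelem e0 = enc (written_val run \<omega>) (eidx e0))"
      unfolding SI_def by blast
    then obtain \<omega>0 p0 where w0: "wstart \<omega>0 p0" "p0 < p" "T \<omega>0 = Tn" using e0(2) False by auto
    have "X \<subseteq> (\<lambda>j. (j, enc (written_val run \<omega>0) j)) ` C"
    proof
      fix x assume "x \<in> X"
      then obtain e where e: "x = (eidx e, eelem e)" "e \<in> \<Union>(ran M')" "etag e = Tn" unfolding X_def by blast
      from SI Esig(1)[OF e(2)] have "(etag e = (0, w0) \<and> eelem e = enc v0 (eidx e)) \<or>
          (\<exists>\<omega> p'. wstart \<omega> p' \<and> p' < p \<and> T \<omega> = etag e \<and> eelem e = enc (written_val run \<omega>) (eidx e))"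
        unfolding SI_def by blast
      then obtain \<omega> p' where "wstart \<omega> p'" "T \<omega> = Tn" "eelem e = enc (written_val run \<omega>) (eidx e)"
        using e(3) False by auto
      moreover then have "\<omega> = \<omega>0" using wstart_unique w0 by metis
      ultimately show "x \<in> (\<lambda>j. (j, enc (written_val run \<omega>0) j)) ` C" using e(1) Esig(2)[OF e(2)] by blast
    qed
    then have "v = written_val run \<omega>0" using vv mds_apply kX by simp
    then show ?thesis using rt w0 by blast
  qed
qed

lemma SI_0: "SI 0"
  unfolding SI_def by (auto simp: run0 init_state_def etag_def eelem_def eidx_def)

lemma SI_keep: "SI n \<Longrightarrow> signed (run (Suc n)) = signed (run n) \<Longrightarrow> SI (Suc n)"
  unfolding SI_def by (metis less_SucI)

lemma SI_step: assumes SI: "SI n" shows "SI (Suc n)"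
proof (cases "signed (run (Suc n)) = signed (run n)")
  case True then show ?thesis using SI_keep SI by blast
next
  case False
  from signed_change[OF False] obtain c where
    ch: "(\<exists>r v M. phs (run n) c = WTag r v M \<and> phs (run (Suc n)) c = WPut (Suc r) {}) \<or>
         (\<exists>r M v. phs (run n) c = RGet r M \<and> phs (run (Suc n)) c = RPut (Suc r) v {})" by blast
  have old: "(etag e = (0, w0) \<and> eelem e = enc v0 (eidx e)) \<or>
     (\<exists>\<omega> p. wstart \<omega> p \<and> p < Suc n \<and> T \<omega> = etag e \<and> eelem e = enc (written_val run \<omega>) (eidx e))"
    if "e \<in> signed (run n)" for e
    using SI that unfolding SI_def by (metis less_SucI)
  from ch show ?thesis
  proof (elim disjE exE conjE)
    fix r v M assume a: "phs (run n) c = WTag r v M" "phs (run (Suc n)) c = WPut (Suc r) {}"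
    have W: "WSTEP n c r v" using PS_all[of n c] a unfolding PS_def Let_def by auto
    obtain i where i: "i < n" "invoked run c i" "active c i n" using current_op[of n c] a(1) by auto
    have wr: "\<exists>v'. phs (run (Suc i)) c = WTag (r0 (c, i)) v' Map.empty"
    proof -
      from invoked_facts[OF i(2)] have "(\<exists>v'. phs (run (Suc i)) c = WTag (r0 (c, i)) v' Map.empty) \<or>
         phs (run (Suc i)) c = RGet (r0 (c, i)) Map.empty" unfolding r0_def fst_conv snd_conv by (rule conjunct2)
      moreover have "phs (run (Suc i)) c \<noteq> RGet (r0 (c, i)) Map.empty"
      proof
        assume "phs (run (Suc i)) c = RGet (r0 (c, i)) Map.empty"
        from read_phase[OF i(2) this _ i(3)] i(1) a(1) show False by auto
      qed
      ultimately show ?thesis by blast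
    qed
    then obtain v' where v': "phs (run (Suc i)) c = WTag (r0 (c, i)) v' Map.empty" by blast
    from write_phase[OF i(2) v' _ i(3)] i(1) a(1) have rv: "r = r0 (c, i)" "v = v'" by auto
    have wv: "written_val run (c, i) = v'" using v' unfolding written_val_def by simp
    have ws: "wstart (c, i) n" unfolding wstart_def using i v' a W rv wv by auto
    have sg: "signed (run (Suc n)) = signed (run n) \<union> {(rtag c (Suc r), j, enc v j) | j. j \<in> C}"
      using W unfolding WSTEP_def by auto
    show ?thesis unfolding SI_def
    proof
      fix e assume "e \<in> signed (run (Suc n))"
      then consider "e \<in> signed (run n)" | j where "e = (rtag c (Suc r), j, enc v j)" using sg by blast
      then show "(etag e = (0, w0) \<and> eelem e = enc v0 (eidx e)) \<or>
         (\<exists>\<omega> p. wstart \<omega> p \<and> p < Suc n \<and> T \<omega> = etag e \<and> eelem e = enc (written_val run \<omega>) (eidx e))"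
      proof cases
        case 1 then show ?thesis by (rule old)
      next
        case (2 j)
        have "T (c, i) = etag e \<and> eelem e = enc (written_val run (c, i)) (eidx e)"
          using 2 rv wv unfolding T_def by (simp add: etag_def eelem_def eidx_def)
        then show ?thesis using ws by blast
      qed
    qed
  next
    fix r M v assume a: "phs (run n) c = RGet r M" "phs (run (Suc n)) c = RPut (Suc r) v {}"
    have R: "RSTEP n c r v" using PS_all[of n c] a unfolding PS_def Let_def by auto
    have sg: "signed (run (Suc n)) = signed (run n) \<union> {(rtag c (Suc r), j, enc v j) | j. j \<in> C}"
      using R unfolding RSTEP_def by auto
    from read_value[OF SI R] have rv: "(rtag c (Suc r) = (0, w0) \<and> v = v0) \<or>
         (\<exists>\<omega> p'. wstart \<omega> p' \<and> p' < n \<and> T \<omega> = rtag c (Suc r) \<and> v = written_val run \<omega>)" .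
    show ?thesis unfolding SI_def
    proof
      fix e assume "e \<in> signed (run (Suc n))"
      then consider "e \<in> signed (run n)" | j where "e = (rtag c (Suc r), j, enc v j)" using sg by blast
      then show "(etag e = (0, w0) \<and> eelem e = enc v0 (eidx e)) \<or>
         (\<exists>\<omega> p. wstart \<omega> p \<and> p < Suc n \<and> T \<omega> = etag e \<and> eelem e = enc (written_val run \<omega>) (eidx e))"
      proof cases
        case 1 then show ?thesis by (rule old)
      next
        case (2 j)
        from rv show ?thesis
        proof (elim disjE exE conjE)
          assume "rtag c (Suc r) = (0, w0)" "v = v0"
          then show ?thesis using 2 by (simp add: etag_def eelem_def eidx_def)
        next
          fix \<omega> p' assume b: "wstart \<omega> p'" "p' < n" "T \<omega> = rtag c (Suc r)" "v = written_val run \<omega>"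
          then have "wstart \<omega> p' \<and> p' < Suc n \<and> T \<omega> = etag e \<and> eelem e = enc (written_val run \<omega>) (eidx e)"
            using 2 by (simp add: etag_def eelem_def eidx_def)
          then show ?thesis by blast
        qed
      qed
    qed
  qed
qed

lemma SI_run: "SI n"
  by (induction n) (use SI_0 SI_step in auto)

end



context proto begin

lemma invoked_unique:
  assumes "invoked run c i" "invoked run c' i"
  shows "c = c'"
  using step[of i] unfolding next_step_def
proof (elim disjE)
  assume "run (Suc i) = run i" then show ?thesis using assms unfolding invoked_def by simp
next
  assume "inv_write C (run i) (run (Suc i))"
  then obtain c0 v where s': "run (Suc i) = (run i)\<lparr>rnd := (rnd (run i))(c0 := Suc (rnd (run i) c0)), phs := (phs (run i))(c0 := WTag (Suc (rnd (run i) c0)) v Map.empty),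
                toNode := toNode (run i) \<union> {(j, Cl c0, QTag (Suc (rnd (run i) c0))) | j. j \<in> C}\<rparr>"
    unfolding inv_write_def Let_def by blast
  have "c = c0" using assms(1) s' unfolding invoked_def by (cases "c = c0") auto
  moreover have "c' = c0" using assms(2) s' unfolding invoked_def by (cases "c' = c0") auto
  ultimately show ?thesis by simp
next
  assume "inv_read C (run i) (run (Suc i))"
  then obtain c0 where s': "run (Suc i) = (run i)\<lparr>rnd := (rnd (run i))(c0 := Suc (rnd (run i) c0)), phs := (phs (run i))(c0 := RGet (Suc (rnd (run i) c0)) Map.empty),
                toNode := toNode (run i) \<union> {(j, Cl c0, QData (Suc (rnd (run i) c0))) | j. j \<in> C}\<rparr>"
    unfolding inv_read_def Let_def by blast
  have "c = c0" using assms(1) s' unfolding invoked_def by (cases "c = c0") auto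
  moreover have "c' = c0" using assms(2) s' unfolding invoked_def by (cases "c' = c0") auto
  ultimately show ?thesis by simp
next
  assume "node_step C Byz \<delta> (run i) (run (Suc i))"
  then obtain j src m where "run (Suc i) = node_recv \<delta> j src m ((run i)\<lparr>toNode := toNode (run i) - {(j, src, m)}\<rparr>)"
    unfolding node_step_def by blast
  note f = node_recv_fields[OF this]
  have "phs (run (Suc i)) = phs (run i)" using f by simp
  then show ?thesis using assms unfolding invoked_def by simp
next
  assume "byz_step C Byz (run i) (run (Suc i))"
  then have "phs (run (Suc i)) = phs (run i)" unfolding byz_step_def by auto
  then show ?thesis using assms unfolding invoked_def by simp
next
  assume "client_step C k enc dec (run i) (run (Suc i))"
  then obtain c0 j m where eq: "run (Suc i) = client_recv C k enc dec c0 j m ((run i)\<lparr>toClient := toClient (run i) - {(c0, j, m)}\<rparr>)"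
    unfolding client_step_def by blast
  have "phs (run (Suc i)) x = phs (run i) x" if "phs (run i) x = Idle" for x
  proof (cases "x = c0")
    case True
    have "phs ((run i)\<lparr>toClient := toClient (run i) - {(c0, j, m)}\<rparr>) c0 = Idle" using that True by simp
    then have "run (Suc i) = (run i)\<lparr>toClient := toClient (run i) - {(c0, j, m)}\<rparr>"
      using eq by (simp add: client_recv_def)
    then show ?thesis by simp
  next
    case False then show ?thesis using client_recv_other[OF eq False] by simp
  qed
  then show ?thesis using assms unfolding invoked_def by auto
qed

lemma ops_before_finite: "finite {\<pi> \<in> ops run. snd \<pi> < N}"
proof -
  have "{\<pi> \<in> ops run. snd \<pi> < N} \<subseteq> (\<lambda>i. (SOME c. invoked run c i, i)) ` {..<N}"
  proof
    fix \<pi> assume a: "\<pi> \<in> {\<pi> \<in> ops run. snd \<pi> < N}"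
    obtain c i where p: "\<pi> = (c, i)" by (cases \<pi>)
    have inv: "invoked run c i" "i < N" using a p unfolding ops_def by auto
    have "(SOME c. invoked run c i) = c" using someI[of "\<lambda>c. invoked run c i" c] inv(1) invoked_unique by blast
    then show "\<pi> \<in> (\<lambda>i. (SOME c. invoked run c i, i)) ` {..<N}" using p inv(2) by force
  qed
  then show ?thesis using finite_subset by blast
qed

lemma write_not_read: "is_write run \<pi> \<Longrightarrow> \<not> is_read run \<pi>"
  unfolding is_write_def is_read_def by auto

lemma op_kind: "\<pi> \<in> ops run \<Longrightarrow> is_write run \<pi> \<or> is_read run \<pi>"
  using invoked_facts unfolding ops_def is_write_def is_read_def by fastforce

lemma signed_tag_ge: assumes "e \<in> signed (run n)" shows "(0, w0) \<le> etag e"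
proof -
  have A: "\<forall>e\<in>signed (run n). eidx e \<in> C \<and> (etag e = (0, w0) \<or> 0 < fst (etag e))"
    using InvS_run[of n] unfolding InvS_def by (rule conjunct2)
  have "eidx e \<in> C \<and> (etag e = (0, w0) \<or> 0 < fst (etag e))" by (rule bspec[OF A assms])
  then have "etag e = (0, w0) \<or> 0 < fst (etag e)" by (rule conjunct2)
  then show ?thesis using lex_fst_pos[of "etag e"] by (metis order.order_iff_strict)
qed

lemma wstart_T_gt: "wstart \<omega> p \<Longrightarrow> (0, w0) < T \<omega>"
  using wstart_tag lex_fst_pos by blast

lemma rstart_T_ge: assumes "rstart \<rho> p v" shows "(0, w0) \<le> T \<rho>"
proof -
  have R: "RSTEP p (fst \<rho>) (r0 \<rho>) v" using assms unfolding rstart_def by auto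
  obtain M' where h: "card (dom M') = q \<and> dom M' \<subseteq> C \<and>
     (\<forall>j \<in> dom M' - Byz. \<exists>i'\<le>p. r0 \<rho> \<le> rnd (run i') (fst \<rho>) \<and> M' j = Some (lists (run i') j)) \<and>
     (\<forall>j X. M' j = Some X \<longrightarrow> X \<subseteq> signed (run p) \<and> (\<forall>e\<in>X. eidx e = j)) \<and>
     candidate_tags k M' \<noteq> {} \<and> rtag (fst \<rho>) (Suc (r0 \<rho>)) = Max (candidate_tags k M') \<and>
     v = rdval dec M' (Max (candidate_tags k M')) \<and>
     signed (run (Suc p)) = signed (run p) \<union> {(rtag (fst \<rho>) (Suc (r0 \<rho>)), j, enc v j) | j. j \<in> C}"
    using R unfolding RSTEP_def by (rule exE)
  obtain j where "j \<in> C" using C_ne by blast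
  then have "(rtag (fst \<rho>) (Suc (r0 \<rho>)), j, enc v j) \<in> signed (run (Suc p))" using h by blast
  from signed_tag_ge[OF this] show ?thesis unfolding T_def by (simp add: etag_def)
qed

lemma op_T_ge:
  assumes "\<pi> \<in> ops run" "complete run \<pi>"
  shows "(0, w0) \<le> T \<pi>"
proof -
  obtain c i where p: "\<pi> = (c, i)" by (cases \<pi>)
  have inv: "invoked run c i" using assms(1) p unfolding ops_def by simp
  note co = complete_op[OF inv assms(2)[unfolded p]]
  from op_kind[OF assms(1)] show ?thesis
  proof
    assume "is_write run \<pi>"
    then obtain q where "wstart (c, i) q" using co p by blast
    then show ?thesis using wstart_T_gt p by (metis order.strict_implies_order)
  next
    assume "is_read run \<pi>"
    then obtain q where "rstart (c, i) q (returned_val run (c, i))" using co p by blast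
    then show ?thesis using rstart_T_ge p by metis
  qed
qed

lemma wstart_op: "wstart \<omega> p \<Longrightarrow> \<omega> \<in> ops run \<and> is_write run \<omega>"
  unfolding wstart_def ops_def is_write_def by (cases \<omega>) auto

lemma delta_bound:
  assumes bwc: "bounded_write_concurrency \<delta> run"
    and rho: "\<rho> \<in> ops run" "is_read run \<rho>"
    and rs: "rstart \<rho> p v" "p < resp_time run \<rho>"
    and Sm: "\<forall>\<pi> \<in> ops run. completes_before run \<pi> \<rho> \<longrightarrow> T \<pi> \<le> Tm"
    and Tm0: "(0, w0) \<le> Tm"
  shows "\<forall>j \<in> C - Byz. \<forall>i'. snd \<rho> < i' \<and> i' \<le> p \<longrightarrow> card {x \<in> etag ` lists (run i') j. Tm < x} \<le> \<delta>"
proof (intro ballI allI impI)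
  fix j i' assume j: "j \<in> C - Byz" and i': "snd \<rho> < i' \<and> i' \<le> p"
  define Z where "Z = {x \<in> etag ` lists (run i') j. Tm < x}"
  define CW where "CW = {\<omega> \<in> ops run. is_write run \<omega> \<and> concurrent run \<omega> \<rho>}"
  have fCW: "finite CW" "card CW \<le> \<delta>" using bwc rho unfolding bounded_write_concurrency_def CW_def by blast+
  have ex: "\<exists>\<omega>. \<omega> \<in> CW \<and> T \<omega> = x" if x: "x \<in> Z" for x
  proof -
    obtain e where e: "e \<in> lists (run i') j" "etag e = x" "Tm < x" using x unfolding Z_def by blast
    have es: "e \<in> signed (run i')" using InvL_run[of i'] j e(1) unfolding InvL_def by blast
    from SI_run[of i'] es have "(etag e = (0, w0) \<and> eelem e = enc v0 (eidx e)) \<or>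
        (\<exists>\<omega> p'. wstart \<omega> p' \<and> p' < i' \<and> T \<omega> = etag e \<and> eelem e = enc (written_val run \<omega>) (eidx e))"
      unfolding SI_def by blast
    moreover have "etag e \<noteq> (0, w0)" using e(2,3) Tm0 by auto
    ultimately obtain \<omega> p' where w: "wstart \<omega> p'" "p' < i'" "T \<omega> = x" using e(2) by auto
    have op: "\<omega> \<in> ops run" "is_write run \<omega>" using wstart_op[OF w(1)] by auto
    have "\<not> completes_before run \<omega> \<rho>" using Sm op w(3) e(3) by fastforce
    moreover have "\<not> completes_before run \<rho> \<omega>"
    proof -
      have "Suc (snd \<omega>) \<le> p'" using w(1) unfolding wstart_def by simp
      then have "snd \<omega> < resp_time run \<rho>" using w(2) i' rs(2) by simp
      then show ?thesis unfolding completes_before_def by simp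
    qed
    ultimately have "\<omega> \<in> CW" using op unfolding CW_def concurrent_def by simp
    then show ?thesis using w(3) by blast
  qed
  define g where "g x = (SOME \<omega>. \<omega> \<in> CW \<and> T \<omega> = x)" for x
  have g: "g x \<in> CW \<and> T (g x) = x" if "x \<in> Z" for x
    using someI_ex[OF ex[OF that]] unfolding g_def .
  have "card Z \<le> card CW"
  proof (rule card_inj_on_le[of g])
    show "inj_on g Z" unfolding inj_on_def using g by metis
    show "g ` Z \<subseteq> CW" using g by blast
    show "finite CW" by (rule fCW(1))
  qed
  then show "card {x \<in> etag ` lists (run i') j. Tm < x} \<le> \<delta>" using fCW(2) unfolding Z_def by simp
qed

lemma A1_read:
  assumes bwc: "bounded_write_concurrency \<delta> run"
    and rho: "\<rho> \<in> ops run" "is_read run \<rho>" "complete run \<rho>"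
    and p1: "\<pi>1 \<in> ops run" "completes_before run \<pi>1 \<rho>"
  shows "T \<pi>1 \<le> T \<rho>"
proof -
  obtain c i where rp: "\<rho> = (c, i)" by (cases \<rho>)
  have inv: "invoked run c i" using rho(1) rp unfolding ops_def by simp
  obtain p where rs: "p < resp_time run \<rho>" "rstart \<rho> p (returned_val run \<rho>)"
    using complete_op[OF inv rho(3)[unfolded rp]] rho(2) rp by blast
  define S where "S = {\<pi> \<in> ops run. completes_before run \<pi> \<rho>}"
  have "S \<subseteq> {\<pi> \<in> ops run. snd \<pi> < snd \<rho>}"
  proof
    fix \<pi> assume "\<pi> \<in> S"
    then have a: "\<pi> \<in> ops run" "complete run \<pi>" "resp_time run \<pi> < snd \<rho>"
      unfolding S_def completes_before_def by auto
    obtain c' i' where pp: "\<pi> = (c', i')" by (cases \<pi>)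
    have "i' < resp_time run (c', i')" using resp_facts[of c' i'] a(2) pp by simp
    then show "\<pi> \<in> {\<pi> \<in> ops run. snd \<pi> < snd \<rho>}" using a pp by simp
  qed
  then have fS: "finite S" using ops_before_finite finite_subset by blast
  have p1S: "\<pi>1 \<in> S" using p1 unfolding S_def by simp
  define Tm where "Tm = Max (T ` S)"
  have "Tm \<in> T ` S" unfolding Tm_def using fS p1S by (intro Max_in) auto
  then obtain \<pi>s where ps: "\<pi>s \<in> S" "T \<pi>s = Tm" by blast
  have Sm: "\<forall>\<pi> \<in> ops run. completes_before run \<pi> \<rho> \<longrightarrow> T \<pi> \<le> Tm"
    unfolding Tm_def using fS S_def by auto
  have psc: "\<pi>s \<in> ops run" "complete run \<pi>s" "resp_time run \<pi>s < snd \<rho>"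
    using ps(1) unfolding S_def completes_before_def by auto
  have Tm0: "(0, w0) \<le> Tm" using op_T_ge[OF psc(1,2)] ps(2) by simp
  obtain cs is' where pps: "\<pi>s = (cs, is')" by (cases \<pi>s)
  have invs: "invoked run cs is'" using psc(1) pps unfolding ops_def by simp
  have st: "stored (resp_time run \<pi>s) Tm" using complete_op[OF invs psc(2)[unfolded pps]] ps(2) pps by simp
  have bound: "\<forall>j \<in> C - Byz. \<forall>i'. snd \<rho> < i' \<and> i' \<le> p \<longrightarrow> card {x \<in> etag ` lists (run i') j. Tm < x} \<le> \<delta>"
    by (rule delta_bound[OF bwc rho(1,2) rs(2,1) Sm Tm0])
  have "Tm \<le> T \<rho>" using rstart_ge[OF rs(2) st _ bound] psc(3) by simp
  moreover have "T \<pi>1 \<le> Tm" using Sm p1 by blast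
  ultimately show ?thesis by simp
qed

lemma A1_write:
  assumes ws: "wstart \<omega> p" and p1: "\<pi>1 \<in> ops run" "completes_before run \<pi>1 \<omega>"
  shows "T \<pi>1 < T \<omega>"
proof -
  obtain c i where pp: "\<pi>1 = (c, i)" by (cases \<pi>1)
  have inv: "invoked run c i" using p1(1) pp unfolding ops_def by simp
  have cp: "complete run (c, i)" "resp_time run (c, i) < snd \<omega>" using p1(2) pp unfolding completes_before_def by auto
  have "stored (resp_time run (c, i)) (T (c, i))" using complete_op[OF inv cp(1)] by blast
  then show ?thesis using wstart_gt[OF ws] cp(2) pp by simp
qed

lemma atomic:
  assumes bwc: "bounded_write_concurrency \<delta> run"
  shows "atomic_register v0 run"
proof -
  define W where "W = {\<omega> \<in> ops run. is_write run \<omega> \<and> \<not> complete run \<omega> \<and> (\<exists>p. wstart \<omega> p)}"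
  define Pi where "Pi = {\<pi> \<in> ops run. complete run \<pi>} \<union> W"
  define prec where "prec = {(a, b). a \<in> Pi \<and> b \<in> Pi \<and> (T a < T b \<or> (T a = T b \<and> is_write run a \<and> is_read run b))}"
  have opPi: "\<pi> \<in> ops run" if "\<pi> \<in> Pi" for \<pi> using that unfolding Pi_def W_def by blast
  have wPi: "\<exists>p. wstart \<pi> p" if "\<pi> \<in> Pi" "is_write run \<pi>" for \<pi>
  proof (cases "complete run \<pi>")
    case True
    obtain c i where pp: "\<pi> = (c, i)" by (cases \<pi>)
    have inv: "invoked run c i" using opPi[OF that(1)] pp unfolding ops_def by simp
    show ?thesis using complete_op[OF inv True[unfolded pp]] that(2) pp by blast
  next
    case False then show ?thesis using that unfolding Pi_def W_def by blast
  qed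
  have rPi: "complete run \<pi> \<and> (\<exists>p. rstart \<pi> p (returned_val run \<pi>))" if "\<pi> \<in> Pi" "is_read run \<pi>" for \<pi>
  proof -
    have cp: "complete run \<pi>" using that write_not_read unfolding Pi_def W_def by blast
    obtain c i where pp: "\<pi> = (c, i)" by (cases \<pi>)
    have inv: "invoked run c i" using opPi[OF that(1)] pp unfolding ops_def by simp
    show ?thesis using complete_op[OF inv cp[unfolded pp]] that(2) pp cp by blast
  qed
  have sub: "prec \<subseteq> Pi \<times> Pi" unfolding prec_def by blast
  have irr: "\<forall>\<pi>\<in>Pi. (\<pi>, \<pi>) \<notin> prec" unfolding prec_def using write_not_read by auto
  have tr: "trans prec"
  proof (rule transI)
    fix a b c assume ab: "(a, b) \<in> prec" and bc: "(b, c) \<in> prec"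
    then show "(a, c) \<in> prec" unfolding prec_def using write_not_read by auto
  qed
  have A1: "\<forall>\<pi>1\<in>Pi. \<forall>\<pi>2\<in>Pi. completes_before run \<pi>1 \<pi>2 \<longrightarrow> (\<pi>2, \<pi>1) \<notin> prec"
  proof (intro ballI impI)
    fix \<pi>1 \<pi>2 assume p: "\<pi>1 \<in> Pi" "\<pi>2 \<in> Pi" "completes_before run \<pi>1 \<pi>2"
    from op_kind[OF opPi[OF p(2)]] show "(\<pi>2, \<pi>1) \<notin> prec"
    proof
      assume w: "is_write run \<pi>2"
      then obtain q where "wstart \<pi>2 q" using wPi p(2) by blast
      then have "T \<pi>1 < T \<pi>2" using A1_write opPi[OF p(1)] p(3) by blast
      then show ?thesis unfolding prec_def by auto
    next
      assume r: "is_read run \<pi>2"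
      have "T \<pi>1 \<le> T \<pi>2" using A1_read[OF bwc opPi[OF p(2)] r _ opPi[OF p(1)] p(3)] rPi[OF p(2) r] by blast
      then show ?thesis unfolding prec_def using r write_not_read[of \<pi>2] by auto
    qed
  qed
  have A2: "\<forall>\<pi>\<in>Pi. \<forall>\<pi>'\<in>Pi. is_write run \<pi> \<and> \<pi> \<noteq> \<pi>' \<longrightarrow> (\<pi>, \<pi>') \<in> prec \<or> (\<pi>', \<pi>) \<in> prec"
  proof (intro ballI impI)
    fix \<pi> \<pi>' assume p: "\<pi> \<in> Pi" "\<pi>' \<in> Pi" "is_write run \<pi> \<and> \<pi> \<noteq> \<pi>'"
    obtain q where q: "wstart \<pi> q" using wPi p by blast
    show "(\<pi>, \<pi>') \<in> prec \<or> (\<pi>', \<pi>) \<in> prec"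
    proof (cases "T \<pi> = T \<pi>'")
      case True
      from op_kind[OF opPi[OF p(2)]] show ?thesis
      proof
        assume "is_write run \<pi>'"
        then obtain q' where "wstart \<pi>' q'" using wPi p(2) by blast
        then have "\<pi> = \<pi>'" using wstart_unique[OF q] True by blast
        then show ?thesis using p(3) by simp
      next
        assume "is_read run \<pi>'"
        then show ?thesis using True p unfolding prec_def by auto
      qed
    next
      case False
      then show ?thesis using p unfolding prec_def by (auto simp: neq_iff)
    qed
  qed
  have A3: "\<forall>\<rho>\<in>Pi. is_read run \<rho> \<longrightarrow>
            (\<exists>\<omega>\<in>Pi. is_write run \<omega> \<and> (\<omega>, \<rho>) \<in> prec \<and>
               (\<forall>\<omega>'\<in>Pi. is_write run \<omega>' \<and> (\<omega>', \<rho>) \<in> prec \<longrightarrow> \<omega>' = \<omega> \<or> (\<omega>', \<omega>) \<in> prec) \<and>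
               returned_val run \<rho> = written_val run \<omega>)
          \<or> ((\<forall>\<omega>\<in>Pi. is_write run \<omega> \<longrightarrow> (\<omega>, \<rho>) \<notin> prec) \<and> returned_val run \<rho> = v0)"
  proof (intro ballI impI)
    fix \<rho> assume rP: "\<rho> \<in> Pi" and rr: "is_read run \<rho>"
    obtain p where rs: "rstart \<rho> p (returned_val run \<rho>)" using rPi[OF rP rr] by blast
    have R: "RSTEP p (fst \<rho>) (r0 \<rho>) (returned_val run \<rho>)" using rs unfolding rstart_def by auto
    from read_value[OF SI_run R] have
      rv: "(T \<rho> = (0, w0) \<and> returned_val run \<rho> = v0) \<or>
         (\<exists>\<omega> p'. wstart \<omega> p' \<and> p' < p \<and> T \<omega> = T \<rho> \<and> returned_val run \<rho> = written_val run \<omega>)"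
      unfolding T_def by simp
    then show "(\<exists>\<omega>\<in>Pi. is_write run \<omega> \<and> (\<omega>, \<rho>) \<in> prec \<and>
               (\<forall>\<omega>'\<in>Pi. is_write run \<omega>' \<and> (\<omega>', \<rho>) \<in> prec \<longrightarrow> \<omega>' = \<omega> \<or> (\<omega>', \<omega>) \<in> prec) \<and>
               returned_val run \<rho> = written_val run \<omega>)
          \<or> ((\<forall>\<omega>\<in>Pi. is_write run \<omega> \<longrightarrow> (\<omega>, \<rho>) \<notin> prec) \<and> returned_val run \<rho> = v0)"
    proof (elim disjE exE conjE)
      assume t0: "T \<rho> = (0, w0)" and v: "returned_val run \<rho> = v0"
      have "(\<omega>, \<rho>) \<notin> prec" if wp: "\<omega> \<in> Pi" "is_write run \<omega>" for \<omega>
      proof -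
        obtain q where "wstart \<omega> q" using wPi wp by blast
        then have "(0, w0) < T \<omega>" by (rule wstart_T_gt)
        then show ?thesis unfolding prec_def using t0 by auto
      qed
      then show ?thesis using v by blast
    next
      fix \<omega> p' assume w: "wstart \<omega> p'" "p' < p" "T \<omega> = T \<rho>" "returned_val run \<rho> = written_val run \<omega>"
      have wo: "\<omega> \<in> ops run" "is_write run \<omega>" using wstart_op[OF w(1)] by auto
      have oP: "\<omega> \<in> Pi" using wo w(1) unfolding Pi_def W_def by blast
      have "(\<omega>, \<rho>) \<in> prec" using oP rP w(3) wo(2) rr unfolding prec_def by simp
      moreover have "\<omega>' = \<omega> \<or> (\<omega>', \<omega>) \<in> prec" if wp: "\<omega>' \<in> Pi" "is_write run \<omega>'" "(\<omega>', \<rho>) \<in> prec" for \<omega>'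
      proof -
        have le: "T \<omega>' \<le> T \<rho>" using wp(3) unfolding prec_def by auto
        show ?thesis
        proof (cases "T \<omega>' = T \<rho>")
          case True
          obtain q' where "wstart \<omega>' q'" using wPi wp by blast
          then show ?thesis using wstart_unique[OF _ w(1)] True w(3) by metis
        next
          case False
          then have "T \<omega>' < T \<omega>" using le w(3) by simp
          then show ?thesis using wp(1) oP unfolding prec_def by simp
        qed
      qed
      ultimately show ?thesis using oP wo(2) w(4) by blast
    qed
  qed
  have Wsub: "W \<subseteq> {\<omega> \<in> ops run. is_write run \<omega> \<and> \<not> complete run \<omega>}" unfolding W_def by blast
  show ?thesis unfolding atomic_register_def Let_def
    using Wsub sub irr tr A1 A2 A3 unfolding Pi_def by blast
qed

end

theorem mainTheorem9:
  fixes C Byz :: "'n set" and b k \<delta> :: nat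
    and enc :: "'v \<Rightarrow> 'n \<Rightarrow> 'e" and dec :: "('n \<times> 'e) set \<Rightarrow> 'v"
    and v0 :: 'v and w0 :: "'w::linorder"
    and run :: "nat \<Rightarrow> ('n,'w,'v,'e) gstate"
  assumes "finite C"
    and "Byz \<subseteq> C" and "card Byz \<le> b"
    and "real b < (real (card C) - real k) / 3"
    and "1 \<le> k" and "k \<le> card C"
    and "1 \<le> \<delta>"
    and "mds_code C k enc dec"
    and "execution C Byz k \<delta> enc dec v0 w0 run"
    and "bounded_write_concurrency \<delta> run"
  shows "atomic_register v0 run"
proof -
  have "real (card Byz) \<le> real b" using assms(3) by simp
  moreover have "3 * real b < real (card C) - real k" using assms(4) by (simp add: field_simps)
  ultimately have "3 * real (card Byz) + real k < real (card C)" by linarith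
  then have byzb: "3 * card Byz + k < card C" by linarith
  interpret proto C Byz k \<delta> enc dec v0 w0 run
    by unfold_locales (use assms byzb in auto)
  show ?thesis using atomic assms(10) by blast
qed

end
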